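(* Let $\mathcal{I}$ be a system of linear inequalities with integer coefficients in variables $x_1,\dots,x_n$ that has no $0$-$1$ solution. Suppose that for some partition of the $n$ variables into two parts, the Karchmer–Wigderson game for $\mathcal{I}$ requires $t$ bits of randomized communication. Then every tree-like Cutting Planes proof of the unsatisfiability of $\mathcal{I}$, even one whose coefficients are of unbounded size, has size $2^{\Omega(t/\log n)}$ (with an absolute constant in the $\Omega(\cdot)$).
   Context: A Cutting Planes (CP) proof that $\mathcal{I}$ has no $0$-$1$ solution is a sequence of linear inequalities with integer coefficients, arranged as a directed acyclic graph, where each line is either an axiom (an inequality of $\mathcal{I}$) or is derived from earlier lines by one of the rules: (addition) from $\vec a_1\cdot\vec x\le c_1$ and $\vec a_2\cdot \vec x\le c_2$ derive $(\vec a_1+\vec a_2)\cdot\vec x\le c_1+c_2$; (scalar multiplication) from $\vec a\cdot\vec x\le c$ derive $d(\vec a\cdot \vec x)\le dc$ for a positive integer $d$ (and with the inequality reversed for a negative integer $d$); (rounded division) from $c(\vec a\cdot\vec x)\le d$ with $c$ a positive integer derive $\vec a\cdot\vec x\le \lfloor d/c\rfloor$; and the last line is an arithmetically false statement such as $1\le 0$. A tree-like CP proof is a CP proof whose underlying graph is a tree (each derived line is used at most once); its size is the number of lines. No bound is imposed on the magnitude of the coefficients. The Karchmer–Wigderson (KW) game for $\mathcal{I}$ with respect to a partition $P_1,P_2$ of the variables is the communication problem in which, for an assignment $\alpha\in\{0,1\}^n$, Alice receives the restriction of $\alpha$ to $P_1$, Bob receives the restriction of $\alpha$ to $P_2$,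 and they must output an inequality of $\mathcal{I}$ falsified by $\alpha$. "Requires $t$ bits of randomized communication" means every public-coin randomized protocol that solves the game with bounded error (correct with high probability on every input) communicates at least $t$ bits. *)

theory Defs
  imports Complex_Main "HOL-Probability.Probability_Mass_Function"
begin

text \<open>An inequality (a, c) stands for  sum_{i < length a} a_i * x_i <= c.
  A system with n variables is a set of such pairs with length a = n.\<close>

type_synonym ineq = "int list \<times> int"

definition lhs_val :: "int list \<Rightarrow> (nat \<Rightarrow> bool) \<Rightarrow> int" where
  "lhs_val a \<alpha> = (\<Sum>i<length a. a ! i * of_bool (\<alpha> i))"

definition sat_ineq :: "(nat \<Rightarrow> bool) \<Rightarrow> ineq \<Rightarrow> bool" where
  "sat_ineq \<alpha> l = (lhs_val (fst l) \<alpha> \<le> snd l)"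

definition wf_system :: "nat \<Rightarrow> ineq set \<Rightarrow> bool" where
  "wf_system n I = (finite I \<and> (\<forall>l\<in>I. length (fst l) = n))"

definition no_01_solution :: "ineq set \<Rightarrow> bool" where
  "no_01_solution I = (\<forall>\<alpha>::nat \<Rightarrow> bool. \<exists>l\<in>I. \<not> sat_ineq \<alpha> l)"

datatype cp_tree =
    CP_Ax ineq
  | CP_Add cp_tree cp_tree
  | CP_Mult int cp_tree
  | CP_Div int cp_tree

inductive cp_derives :: "ineq set \<Rightarrow> cp_tree \<Rightarrow> ineq \<Rightarrow> bool" for I where
  ax: "l \<in> I \<Longrightarrow> cp_derives I (CP_Ax l) l"
| add: "cp_derives I T1 (a1, c1) \<Longrightarrow> cp_derives I T2 (a2, c2) \<Longrightarrow> length a1 = length a2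
        \<Longrightarrow> cp_derives I (CP_Add T1 T2) (map2 (+) a1 a2, c1 + c2)"
| mult: "cp_derives I T (a, c) \<Longrightarrow> d > 0
        \<Longrightarrow> cp_derives I (CP_Mult d T) (map (\<lambda>x. d * x) a, d * c)"
| rdiv: "cp_derives I T (a, c) \<Longrightarrow> e > 0 \<Longrightarrow> (\<forall>x\<in>set a. e dvd x)
        \<Longrightarrow> cp_derives I (CP_Div e T) (map (\<lambda>x. x div e) a, c div e)"

fun cp_size :: "cp_tree \<Rightarrow> nat" where
  "cp_size (CP_Ax l) = 1"
| "cp_size (CP_Add T1 T2) = cp_size T1 + cp_size T2 + 1"
| "cp_size (CP_Mult d T) = cp_size T + 1"
| "cp_size (CP_Div e T) = cp_size T + 1"

definition false_line :: "ineq \<Rightarrow> bool" where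
  "false_line l = ((\<forall>x\<in>set (fst l). x = 0) \<and> snd l < 0)"

definition treelike_cp_refutation :: "ineq set \<Rightarrow> cp_tree \<Rightarrow> bool" where
  "treelike_cp_refutation I T = (\<exists>l. cp_derives I T l \<and> false_line l)"

datatype ('a, 'b, 'o) protocol =
    PLeaf 'o
  | PAlice "'a \<Rightarrow> bool" "('a, 'b, 'o) protocol" "('a, 'b, 'o) protocol"
  | PBob "'b \<Rightarrow> bool" "('a, 'b, 'o) protocol" "('a, 'b, 'o) protocol"

fun prot_run :: "('a, 'b, 'o) protocol \<Rightarrow> 'a \<Rightarrow> 'b \<Rightarrow> 'o" where
  "prot_run (PLeaf r) x y = r"
| "prot_run (PAlice f p q) x y = (if f x then prot_run p x y else prot_run q x y)"
| "prot_run (PBob g p q) x y = (if g y then prot_run p x y else prot_run q x y)"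

fun prot_cost :: "('a, 'b, 'o) protocol \<Rightarrow> nat" where
  "prot_cost (PLeaf r) = 0"
| "prot_cost (PAlice f p q) = Suc (max (prot_cost p) (prot_cost q))"
| "prot_cost (PBob g p q) = Suc (max (prot_cost p) (prot_cost q))"

text \<open>A public-coin randomized protocol is a probability distribution over deterministic
  protocols (the public random string selects the deterministic protocol).\<close>

definition restrict_to :: "nat set \<Rightarrow> (nat \<Rightarrow> bool) \<Rightarrow> (nat \<Rightarrow> bool)" where
  "restrict_to S \<alpha> = (\<lambda>i. if i \<in> S then \<alpha> i else False)"

definition kw_rand_solves ::
  "nat \<Rightarrow> ineq set \<Rightarrow> nat set \<Rightarrow> (nat \<Rightarrow> bool, nat \<Rightarrow> bool, ineq) protocol pmf \<Rightarrow> bool" where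
  "kw_rand_solves n I P1 R =
     (\<forall>\<alpha>::nat \<Rightarrow> bool.
        measure_pmf.prob R
          {p. let l = prot_run p (restrict_to P1 \<alpha>) (restrict_to ({..<n} - P1) \<alpha>)
              in l \<in> I \<and> \<not> sat_ineq \<alpha> l} \<ge> 2/3)"

definition kw_requires_rand_bits :: "nat \<Rightarrow> ineq set \<Rightarrow> nat set \<Rightarrow> nat \<Rightarrow> bool" where
  "kw_requires_rand_bits n I P1 t =
     (\<forall>R k. kw_rand_solves n I P1 R \<longrightarrow> (\<forall>p\<in>set_pmf R. prot_cost p \<le> k) \<longrightarrow> t \<le> k)"

end

theory Submission
  imports Defs "HOL-Library.Discrete_Functions"
begin
lemma measure_bind_pmf_eq:
  "measure_pmf.prob (bind_pmf M N) X = (\<integral>x. measure_pmf.prob (N x) X \<partial>M)"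
proof -
  have "ennreal (measure_pmf.prob (bind_pmf M N) X) = emeasure (bind_pmf M N) X"
    by (simp add: measure_pmf.emeasure_eq_measure)
  also have "\<dots> = (\<integral>\<^sup>+x. emeasure (N x) X \<partial>M)"
    by simp
  also have "\<dots> = (\<integral>\<^sup>+x. ennreal (measure_pmf.prob (N x) X) \<partial>M)"
    by (simp add: measure_pmf.emeasure_eq_measure)
  also have "\<dots> = ennreal (\<integral>x. measure_pmf.prob (N x) X \<partial>M)"
    by (rule nn_integral_eq_integral)
       (auto intro!: measure_pmf.integrable_const_bound[where B=1])
  finally show ?thesis by (simp add: integral_nonneg_AE)
qed

lemma bind_bound:
  assumes "\<And>x. measure_pmf.prob (N x) X \<le> (if x \<in> A then a else 0) + b" "a \<ge> 0" "b \<ge> 0"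
  shows "measure_pmf.prob (bind_pmf M N) X \<le> measure_pmf.prob M A * a + b"
proof -
  have i1: "integrable M (\<lambda>x. measure_pmf.prob (N x) X)"
    by (auto intro!: measure_pmf.integrable_const_bound[where B=1])
  have i2: "integrable M (\<lambda>x. indicator A x * a + b)"
    by (rule measure_pmf.integrable_const_bound[where B="a+b"]) (auto simp: indicator_def assms)
  have "measure_pmf.prob (bind_pmf M N) X = (\<integral>x. measure_pmf.prob (N x) X \<partial>M)"
    by (rule measure_bind_pmf_eq)
  also have "\<dots> \<le> (\<integral>x. indicator A x * a + b \<partial>M)"
  proof (rule integral_mono[OF i1 i2])
    fix x show "measure_pmf.prob (N x) X \<le> indicator A x * a + b"
      using assms(1)[of x] by (auto simp: indicator_def)
  qed
  also have "\<dots> = measure_pmf.prob M A * a + b"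
  proof -
    have "integrable M (\<lambda>x. indicat_real A x * a)"
      by (rule measure_pmf.integrable_const_bound[where B="a"]) (auto simp: indicator_def assms)
    then show ?thesis
      by (simp add: Bochner_Integration.integral_add measure_pmf.prob_space)
  qed
  finally show ?thesis .
qed

fun iidlist :: "'r pmf \<Rightarrow> nat \<Rightarrow> 'r list pmf" where
  "iidlist \<mu> 0 = return_pmf []"
| "iidlist \<mu> (Suc T) = bind_pmf \<mu> (\<lambda>r. map_pmf (Cons r) (iidlist \<mu> T))"

fun runS :: "('s \<Rightarrow> 'r \<Rightarrow> 's) \<Rightarrow> 's \<Rightarrow> 'r list \<Rightarrow> 's" where
  "runS f s [] = s"
| "runS f s (r # rs) = runS f (f s r) rs"

fun nbadS :: "('s \<Rightarrow> 'r \<Rightarrow> 's) \<Rightarrow> ('s \<Rightarrow> 'r \<Rightarrow> bool) \<Rightarrow> 's \<Rightarrow> 'r list \<Rightarrow> nat" where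
  "nbadS f bd s [] = 0"
| "nbadS f bd s (r # rs) = of_bool (bd s r) + nbadS f bd (f s r) rs"

lemma tail_bound:
  assumes bd: "\<And>s. measure_pmf.prob \<mu> {r. bd s r} \<le> p" and p: "p \<ge> 0"
  shows "measure_pmf.prob (iidlist \<mu> T) {rs. b \<le> nbadS f bd s rs} \<le> real (T choose b) * p ^ b"
proof (induction T arbitrary: s b)
  case 0
  then show ?case by (cases b) auto
next
  case (Suc T)
  show ?case
  proof (cases b)
    case 0
    then show ?thesis by simp
  next
    case (Suc b')
    have "measure_pmf.prob (iidlist \<mu> (Suc T)) {rs. b \<le> nbadS f bd s rs}
        = measure_pmf.prob (bind_pmf \<mu> (\<lambda>r. map_pmf (Cons r) (iidlist \<mu> T))) {rs. b \<le> nbadS f bd s rs}"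
      by simp
    also have "\<dots> \<le> measure_pmf.prob \<mu> {r. bd s r} * (real (T choose b') * p ^ b') + real (T choose b) * p ^ b"
    proof (rule bind_bound)
      fix r
      show "measure_pmf.prob (map_pmf ((#) r) (iidlist \<mu> T)) {rs. b \<le> nbadS f bd s rs}
          \<le> (if r \<in> {r. bd s r} then real (T choose b') * p ^ b' else 0) + real (T choose b) * p ^ b"
      proof (cases "bd s r")
        case True
        have "measure_pmf.prob (map_pmf ((#) r) (iidlist \<mu> T)) {rs. b \<le> nbadS f bd s rs}
           = measure_pmf.prob (iidlist \<mu> T) {rs. b' \<le> nbadS f bd (f s r) rs}"
          using True Suc by (simp add: vimage_def)
        also have "\<dots> \<le> real (T choose b') * p ^ b'" by (rule Suc.IH)
        moreover have "0 \<le> real (T choose b) * p ^ b" using p by simp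
        ultimately show ?thesis using True by simp
      next
        case False
        have "measure_pmf.prob (map_pmf ((#) r) (iidlist \<mu> T)) {rs. b \<le> nbadS f bd s rs}
           = measure_pmf.prob (iidlist \<mu> T) {rs. b \<le> nbadS f bd (f s r) rs}"
          using False by (simp add: vimage_def)
        also have "\<dots> \<le> real (T choose b) * p ^ b" by (rule Suc.IH)
        finally show ?thesis using False by simp
      qed
    qed (use p in auto)
    also have "\<dots> \<le> p * (real (T choose b') * p ^ b') + real (T choose b) * p ^ b"
      using bd[of s] p by (intro add_right_mono mult_right_mono) auto
    also have "\<dots> = real (Suc T choose b) * p ^ b"
      using Suc by (simp add: algebra_simps)
    finally show ?thesis .
  qed
qed

lemma set_iidlist: "rs \<in> set_pmf (iidlist \<mu> T) \<Longrightarrow> length rs = T"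
  by (induction T arbitrary: rs) auto

fun pbind :: "('a,'b,'o) protocol \<Rightarrow> ('o \<Rightarrow> ('a,'b,'p) protocol) \<Rightarrow> ('a,'b,'p) protocol" where
  "pbind (PLeaf r) f = f r"
| "pbind (PAlice g p q) f = PAlice g (pbind p f) (pbind q f)"
| "pbind (PBob g p q) f = PBob g (pbind p f) (pbind q f)"

lemma run_pbind: "prot_run (pbind p f) x y = prot_run (f (prot_run p x y)) x y"
  by (induction p) auto

lemma cost_pbind: "(\<And>z. prot_cost (f z) \<le> k) \<Longrightarrow> prot_cost (pbind p f) \<le> prot_cost p + k"
  by (induction p) (auto simp: max_def)

fun iterP :: "('s \<Rightarrow> 'r \<Rightarrow> ('a,'b,'s) protocol) \<Rightarrow> 's \<Rightarrow> 'r list \<Rightarrow> ('a,'b,'s) protocol" where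
  "iterP P s [] = PLeaf s"
| "iterP P s (r # rs) = pbind (P s r) (\<lambda>s'. iterP P s' rs)"

lemma run_iterP: "prot_run (iterP P s rs) x y = runS (\<lambda>s r. prot_run (P s r) x y) s rs"
  by (induction rs arbitrary: s) (auto simp: run_pbind)

lemma cost_iterP:
  assumes "\<And>s r. prot_cost (P s r) \<le> k"
  shows "prot_cost (iterP P s rs) \<le> length rs * k"
proof (induction rs arbitrary: s)
  case Nil then show ?case by simp
next
  case (Cons r rs)
  have "prot_cost (iterP P s (r # rs)) \<le> prot_cost (P s r) + length rs * k"
    by (simp, rule cost_pbind, rule Cons.IH)
  also have "\<dots> \<le> length (r # rs) * k" using assms[of s r] by simp
  finally show ?case .
qed

lemma potential_run:
  fixes phi :: "'s \<Rightarrow> int"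
  assumes Inv: "\<And>s r. Inv s \<Longrightarrow> Inv (f s r)"
    and good: "\<And>s r. Inv s \<Longrightarrow> \<not> bd s r \<Longrightarrow> phi (f s r) \<le> phi s - 1"
    and any: "\<And>s r. Inv s \<Longrightarrow> phi (f s r) \<le> phi s + 1"
    and "Inv s"
  shows "Inv (runS f s rs) \<and> phi (runS f s rs) \<le> phi s - int (length rs) + 2 * int (nbadS f bd s rs)"
  using \<open>Inv s\<close>
proof (induction rs arbitrary: s)
  case Nil then show ?case by simp
next
  case (Cons r rs)
  have I: "Inv (f s r)" using Inv Cons.prems by blast
  from Cons.IH[OF I] have "Inv (runS f (f s r) rs) \<and> phi (runS f (f s r) rs) \<le> phi (f s r) - int (length rs) + 2 * int (nbadS f bd (f s r) rs)" .
  moreover have "phi (f s r) \<le> phi s - 1 + 2 * of_bool (bd s r)"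
    using good[OF Cons.prems, of r] any[OF Cons.prems, of r] by (cases "bd s r") auto
  ultimately show ?case by auto
qed

lemma invariant_run:
  assumes "\<And>s r. Inv s \<Longrightarrow> \<not> bd s r \<Longrightarrow> Inv (f s r)" "Inv s" "nbadS f bd s rs = 0"
  shows "Inv (runS f s rs)"
  using assms(2,3)
  by (induction rs arbitrary: s) (auto simp: assms(1))

fun lcp :: "'a list \<Rightarrow> 'a list \<Rightarrow> nat" where
  "lcp (x # xs) (y # ys) = (if x = y then Suc (lcp xs ys) else 0)"
| "lcp _ _ = 0"

definition pref :: "'a list \<Rightarrow> 'a list \<Rightarrow> bool" where
  "pref u t = (take (length u) t = u)"

lemma lcp_le1: "lcp u t \<le> length u"
  by (induction u t rule: lcp.induct) auto
lemma lcp_le2: "lcp u t \<le> length t"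
  by (induction u t rule: lcp.induct) auto

lemma lcp_pref: "pref u t \<longleftrightarrow> lcp u t = length u"
  unfolding pref_def by (induction u t rule: lcp.induct) auto

lemma lcp_take: "k \<le> length u \<Longrightarrow> k \<le> length t \<Longrightarrow> (take k u = take k t) \<longleftrightarrow> k \<le> lcp u t"
proof (induction u t arbitrary: k rule: lcp.induct)
  case (1 x xs y ys)
  then show ?case by (cases k) auto
qed auto

lemma lcp_snoc_notpref: "\<not> pref u t \<Longrightarrow> lcp (u @ [b]) t = lcp u t"
  unfolding pref_def by (induction u t rule: lcp.induct) auto

lemma lcp_snoc_pref: "pref u t \<Longrightarrow> length u < length t \<Longrightarrow>
   lcp (u @ [b]) t = (if b = t ! length u then Suc (length u) else length u)"
  unfolding pref_def
proof (induction u arbitrary: t)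
  case Nil
  then show ?case by (cases t) auto
next
  case (Cons x xs)
  then show ?case by (cases t) auto
qed

lemma lcp_butlast_notpref: "\<not> pref u t \<Longrightarrow> lcp (butlast u) t = lcp u t"
  unfolding pref_def
proof (induction u arbitrary: t)
  case Nil
  then show ?case by simp
next
  case (Cons x xs)
  then show ?case by (cases t; cases xs) auto
qed

lemma pref_butlast: "pref u t \<Longrightarrow> pref (butlast u) t"
  unfolding pref_def
  by (metis butlast_take diff_le_self length_butlast length_take min.absorb_iff1 take_all_iff take_butlast take_take)

lemma pref_snoc: "pref u t \<Longrightarrow> length u < length t \<Longrightarrow> pref (u @ [b]) t \<longleftrightarrow> b = t ! length u"
  using lcp_snoc_pref[of u t b] lcp_pref[of "u@[b]" t] by auto

lemma pref_full: "pref u t \<Longrightarrow> length u = length t \<Longrightarrow> u = t"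
  unfolding pref_def by simp

definition wstep :: "nat \<Rightarrow> bool list \<times> nat \<Rightarrow> bool \<Rightarrow> bool \<Rightarrow> bool list \<times> nat" where
  "wstep H s a1 a2 = (let (u, c) = s in
     if a1 then (if length u = H then (u, Suc c) else (u @ [a2], 0))
     else (if c > 0 then (u, c - 1) else (butlast u, 0)))"

definition wgood :: "bool list \<Rightarrow> bool list \<times> nat \<Rightarrow> bool \<Rightarrow> bool \<Rightarrow> bool" where
  "wgood t s a1 a2 = (a1 = pref (fst s) t \<and> (pref (fst s) t \<and> length (fst s) < length t \<longrightarrow> a2 = t ! length (fst s)))"

definition phi :: "bool list \<Rightarrow> bool list \<times> nat \<Rightarrow> int" where
  "phi t s = (if fst s = t then - int (snd s)
     else int (snd s) + int (length (fst s)) + int (length t) - 2 * int (lcp (fst s) t))"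

definition winv :: "nat \<Rightarrow> bool list \<times> nat \<Rightarrow> bool" where
  "winv H s = (length (fst s) \<le> H \<and> (snd s > 0 \<longrightarrow> length (fst s) = H))"

lemma wstep_inv: "winv H s \<Longrightarrow> winv H (wstep H s a1 a2)"
  by (cases s) (auto simp: winv_def wstep_def)

lemma phi_pos: "fst s \<noteq> t \<Longrightarrow> length (fst s) \<le> length t \<Longrightarrow> phi t s \<ge> 1"
proof -
  assume a: "fst s \<noteq> t" "length (fst s) \<le> length t"
  have "lcp (fst s) t < length (fst s) \<or> lcp (fst s) t < length t"
  proof (rule ccontr)
    assume "\<not> ?thesis"
    then have "lcp (fst s) t = length (fst s)" "length (fst s) = length t"
      using lcp_le1[of "fst s" t] lcp_le2[of "fst s" t] a by auto
    then show False using a lcp_pref pref_full by blast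
  qed
  then show ?thesis using a lcp_le1[of "fst s" t] lcp_le2[of "fst s" t] by (auto simp: phi_def)
qed

lemma wstep_good:
  assumes "winv (length t) s" "wgood t s a1 a2"
  shows "phi t (wstep (length t) s a1 a2) \<le> phi t s - 1"
proof -
  obtain u c where s: "s = (u, c)" by force
  show ?thesis
  proof (cases "pref u t")
    case True
    then have a1: a1 using assms by (simp add: wgood_def s)
    have lcu: "lcp u t = length u" using True lcp_pref by blast
    show ?thesis
    proof (cases "length u = length t")
      case True
      then have "u = t" using \<open>pref u t\<close> pref_full by blast
      then show ?thesis using a1 by (simp add: s wstep_def phi_def)
    next
      case False
      then have lt': "length u < length t" using assms by (simp add: winv_def s)
      have c: "c = 0" using assms False by (simp add: winv_def s)
      have a2: "a2 = t ! length u" using assms True lt' by (simp add: wgood_def s)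
      have pr: "pref (u @ [a2]) t" using pref_snoc[OF True lt'] a2 by simp
      have l2: "lcp (u @ [a2]) t = Suc (length u)" using lcp_pref[of "u@[a2]" t] pr by simp
      have ut: "u \<noteq> t" using lt' by auto
      have st: "wstep (length t) s a1 a2 = (u @ [a2], 0)" using a1 False by (simp add: s wstep_def)
      have p0: "phi t s = int (length t) - int (length u)" using ut c lcu by (simp add: s phi_def)
      show ?thesis
      proof (cases "u @ [a2] = t")
        case True
        then have "length t = Suc (length u)" by auto
        then show ?thesis using True st p0 by (simp add: phi_def)
      next
        case F2: False
        then show ?thesis using st p0 l2 by (simp add: phi_def)
      qed
    qed
  next
    case False
    then have na1: "\<not> a1" using assms by (simp add: wgood_def s)
    have ut: "u \<noteq> t" using False unfolding pref_def by auto
    show ?thesis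
    proof (cases "c > 0")
      case True
      have st: "wstep (length t) s a1 a2 = (u, c - 1)" using na1 True by (simp add: s wstep_def)
      show ?thesis using st ut True by (simp add: phi_def s)
    next
      case F2: False
      have ne: "u \<noteq> []" using False by (cases u) (auto simp: pref_def)
      have st: "wstep (length t) s a1 a2 = (butlast u, 0)" using na1 F2 by (simp add: s wstep_def)
      have "length (butlast u) < length t" using assms ne by (cases u) (auto simp: winv_def s)
      then have "butlast u \<noteq> t" by auto
      moreover have "lcp (butlast u) t = lcp u t" using lcp_butlast_notpref False by blast
      moreover have "length (butlast u) = length u - 1" by simp
      ultimately show ?thesis using st ut F2 ne by (simp add: phi_def s)
    qed
  qed
qed

lemma wstep_any:
  assumes "winv (length t) s"
  shows "phi t (wstep (length t) s a1 a2) \<le> phi t s + 1"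
proof -
  obtain u c where s: "s = (u, c)" by force
  note lu = lcp_le1[of u t] and lt = lcp_le2[of u t]
  show ?thesis
  proof (cases a1)
    case True
    show ?thesis
    proof (cases "length u = length t")
      case T2: True
      have st: "wstep (length t) s a1 a2 = (u, Suc c)" using True T2 by (simp add: s wstep_def)
      show ?thesis using st by (simp add: phi_def s)
    next
      case False
      then have lt': "length u < length t" using assms by (simp add: winv_def s)
      have c: "c = 0" using assms False by (simp add: winv_def s)
      have ut: "u \<noteq> t" using lt' by auto
      have st: "wstep (length t) s a1 a2 = (u @ [a2], 0)" using True False by (simp add: s wstep_def)
      have l2: "lcp (u @ [a2]) t \<ge> lcp u t"
      proof (cases "pref u t")
        case True
        then show ?thesis using lcp_snoc_pref[OF True lt', of a2] lcp_pref[of u t] by simp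
      next
        case False
        then show ?thesis using lcp_snoc_notpref[OF False, of a2] by simp
      qed
      have l3: "lcp (u @ [a2]) t \<le> Suc (length u)" using lcp_le1[of "u@[a2]" t] by simp
      have p0: "phi t s = int (length u) + int (length t) - 2 * int (lcp u t)" using ut c by (simp add: s phi_def)
      show ?thesis
      proof (cases "u @ [a2] = t")
        case True
        then show ?thesis using st p0 lu lt by (simp add: phi_def)
      next
        case False
        then show ?thesis using st p0 l2 by (simp add: phi_def)
      qed
    qed
  next
    case False
    show ?thesis
    proof (cases "c > 0")
      case True
      have st: "wstep (length t) s a1 a2 = (u, c - 1)" using False True by (simp add: s wstep_def)
      show ?thesis using st True by (simp add: phi_def s)
    next
      case F2: False
      have st: "wstep (length t) s a1 a2 = (butlast u, 0)" using False F2 by (simp add: s wstep_def)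
      have c: "c = 0" using F2 by simp
      show ?thesis
      proof (cases "pref u t")
        case True
        have "pref (butlast u) t" using pref_butlast True by blast
        then have l: "lcp (butlast u) t = length u - 1" using lcp_pref[of "butlast u" t] by simp
        have lcu: "lcp u t = length u" using True lcp_pref by blast
        show ?thesis
        proof (cases "u = []")
          case True
          then show ?thesis using st c by (simp add: phi_def s)
        next
          case ne: False
          have "length (butlast u) < length t" using assms ne by (cases u) (auto simp: winv_def s)
          then have bt: "butlast u \<noteq> t" by auto
          have "length u \<le> length t" using assms by (simp add: winv_def s)
          then show ?thesis using st c bt l lcu ne by (cases "u = t") (simp_all add: phi_def s)
        qed
      next
        case nf: False
        have ne: "u \<noteq> []" using nf by (cases u) (auto simp: pref_def)
        have ut: "u \<noteq> t" using nf unfolding pref_def by auto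
        have "length (butlast u) < length t" using assms ne by (cases u) (auto simp: winv_def s)
        then have "butlast u \<noteq> t" by auto
        moreover have "lcp (butlast u) t = lcp u t" using lcp_butlast_notpref nf by blast
        ultimately show ?thesis using st ut c ne by (simp add: phi_def s)
      qed
    qed
  qed
qed

fun bitsN :: "nat \<Rightarrow> nat \<Rightarrow> bool list" where
  "bitsN 0 v = []"
| "bitsN (Suc k) v = bit v k # bitsN k v"

fun bval :: "bool list \<Rightarrow> nat" where
  "bval [] = 0"
| "bval (b # u) = of_bool b * 2 ^ length u + bval u"

lemma length_bitsN[simp]: "length (bitsN k v) = k"
  by (induction k) auto

lemma bitsN_take_bit: "bitsN k (take_bit k v) = bitsN k v"
proof -
  have "\<And>j. j \<le> k \<Longrightarrow> bitsN j (take_bit k v) = bitsN j v"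
  proof -
    fix j show "j \<le> k \<Longrightarrow> bitsN j (take_bit k v) = bitsN j v"
      by (induction j) (auto simp: bit_take_bit_iff)
  qed
  then show ?thesis by simp
qed

lemma bval_less: "bval u < 2 ^ length u"
proof (induction u)
  case (Cons b u)
  then show ?case by (cases b) auto
qed simp

lemma bval_bitsN: "bval (bitsN k v) = take_bit k v"
  by (induction k) (auto simp: take_bit_Suc_from_most)

lemma bitsN_bval: "bitsN (length u) (bval u) = u"
proof (induction u)
  case (Cons b u)
  have tb: "take_bit (length u) (bval (b # u)) = bval u"
    using bval_less[of u] by (cases b) (auto simp: take_bit_eq_mod)
  have bt: "bit (bval (b # u)) (length u) = b"
    using bval_less[of u] by (cases b) (auto simp: bit_iff_odd)
  have "bitsN (length u) (bval (b # u)) = u"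
    using bitsN_take_bit[of "length u" "bval (b#u)"] tb Cons by simp
  then show ?case using bt by simp
qed simp

lemma bval_snoc: "bval (u @ [b]) = 2 * bval u + of_bool b"
  by (induction u) (auto simp: algebra_simps)

lemma gt_bits: "take_bit N Y < take_bit N X \<longleftrightarrow>
   (lcp (bitsN N X) (bitsN N Y) < N \<and> bitsN N X ! lcp (bitsN N X) (bitsN N Y))"
proof (induction N)
  case 0
  then show ?case by simp
next
  case (Suc N)
  have x: "take_bit (Suc N) X = 2 ^ N * of_bool (bit X N) + take_bit N X"
    and y: "take_bit (Suc N) Y = 2 ^ N * of_bool (bit Y N) + take_bit N Y"
    by (simp_all add: take_bit_Suc_from_most)
  have bx: "take_bit N X < 2 ^ N" and by': "take_bit N Y < 2 ^ N" by simp_all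
  show ?case
  proof (cases "bit X N = bit Y N")
    case True
    then show ?thesis using Suc x y by auto
  next
    case False
    then show ?thesis using x y bx by'
      apply (cases "bit X N")
       apply auto
       apply (insert bx by', linarith)+
      done
  qed
qed

lemma pref_bits_interval:
  assumes "length u \<le> H" "L < 2 ^ H"
  shows "pref u (bitsN H L) \<longleftrightarrow>
    bval u * 2 ^ (H - length u) \<le> L \<and> L < (bval u + 1) * 2 ^ (H - length u)"
  using assms
proof (induction u arbitrary: H L)
  case Nil
  then show ?case by (simp add: pref_def)
next
  case (Cons b u)
  then obtain H' where H: "H = Suc H'" by (cases H) auto
  define l' where "l' = take_bit H' L"
  have l'lt: "l' < 2 ^ H'" by (simp add: l'_def)
  have ldec: "L = 2 ^ H' * of_bool (bit L H') + l'"
    using Cons.prems H by (simp add: l'_def take_bit_Suc_from_most[symmetric] take_bit_nat_eq_self)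
  have IH: "pref u (bitsN H' L) \<longleftrightarrow>
    bval u * 2 ^ (H' - length u) \<le> l' \<and> l' < (bval u + 1) * 2 ^ (H' - length u)"
    using Cons.IH[of H' l'] Cons.prems H l'lt by (simp add: l'_def bitsN_take_bit)
  define m where "m = (2::nat) ^ (H' - length u)"
  have lu: "length u \<le> H'" using Cons.prems H by simp
  have pm: "2 ^ length u * m = (2::nat) ^ H'"
    using lu by (simp add: m_def power_add[symmetric])
  have vb: "(bval u + 1) * m \<le> 2 ^ H'"
  proof -
    have "bval u + 1 \<le> 2 ^ length u" using bval_less[of u] by simp
    then have "(bval u + 1) * m \<le> 2 ^ length u * m" by (rule mult_le_mono1)
    then show ?thesis using pm by simp
  qed
  have lhs: "pref (b # u) (bitsN H L) \<longleftrightarrow> b = bit L H' \<and> pref u (bitsN H' L)"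
    by (auto simp: H pref_def)
  have e1: "bval (b # u) * 2 ^ (H - length (b # u)) = 2 ^ H' * of_bool b + bval u * m"
    using pm H by (simp add: m_def algebra_simps)
  have e2: "(bval (b # u) + 1) * 2 ^ (H - length (b # u)) = 2 ^ H' * of_bool b + (bval u + 1) * m"
    using pm H by (simp add: m_def algebra_simps)
  show ?case
    unfolding lhs IH e1 e2 m_def[symmetric]
    using ldec vb l'lt by (cases b; cases "bit L H'") auto
qed

definition Fh :: "nat \<Rightarrow> (bool list \<Rightarrow> bool) set" where
  "Fh N = {h. \<forall>x. N < length x \<longrightarrow> \<not> h x}"

lemma Fh_eq: "Fh N = (\<lambda>A x. x \<in> A) ` Pow {x :: bool list. length x \<le> N}"
proof (intro equalityI subsetI)
  fix h assume "h \<in> Fh N"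
  then show "h \<in> (\<lambda>A x. x \<in> A) ` Pow {x :: bool list. length x \<le> N}"
    by (intro image_eqI[where x="{x. h x}"]) (auto simp: Fh_def not_less[symmetric])
qed (auto simp: Fh_def)

lemma finite_Fh: "finite (Fh N)"
proof -
  have "finite {x :: bool list. length x \<le> N}"
    using finite_lists_length_le[of "UNIV :: bool set" N] by simp
  then show ?thesis by (simp add: Fh_eq)
qed

lemma Fh_ne: "Fh N \<noteq> {}"
  by (auto simp: Fh_def intro!: exI[where x="\<lambda>_. False"])

definition muh :: "nat \<Rightarrow> (bool list \<Rightarrow> bool) pmf" where
  "muh N = pmf_of_set (Fh N)"

lemma muh_collision:
  assumes "a \<noteq> b" "length a \<le> N" "length b \<le> N"
  shows "measure_pmf.prob (muh N) {h. h a = h b} \<le> 1/2"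
proof -
  let ?F = "Fh N"
  let ?E = "{h. h a = h b}"
  define g where "g = (\<lambda>h::bool list \<Rightarrow> bool. h(a := \<not> h a))"
  have gg: "g (g h) = h" for h by (auto simp: g_def)
  have gF: "h \<in> ?F \<Longrightarrow> g h \<in> ?F" for h using assms by (auto simp: Fh_def g_def)
  have "bij_betw g (?F \<inter> ?E) (?F \<inter> - ?E)"
  proof (rule bij_betw_byWitness[where f'=g])
    show "\<forall>h\<in>?F \<inter> ?E. g (g h) = h" "\<forall>h\<in>?F \<inter> - ?E. g (g h) = h" using gg by auto
    show "g ` (?F \<inter> ?E) \<subseteq> ?F \<inter> - ?E" using assms by (auto simp: g_def Fh_def split: if_splits)
    show "g ` (?F \<inter> - ?E) \<subseteq> ?F \<inter> ?E" using assms by (auto simp: g_def Fh_def split: if_splits)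
  qed
  then have c: "card (?F \<inter> ?E) = card (?F \<inter> - ?E)" by (rule bij_betw_same_card)
  have "card (?F \<inter> ?E) + card (?F \<inter> - ?E) = card ?F"
    using finite_Fh by (subst card_Un_disjoint[symmetric]) (auto intro: arg_cong[where f=card])
  then have "2 * card (?F \<inter> ?E) = card ?F" using c by simp
  moreover have "card ?F > 0" using finite_Fh Fh_ne by (simp add: card_gt_0_iff)
  ultimately show ?thesis
    unfolding muh_def using finite_Fh Fh_ne
    by (simp add: measure_pmf_of_set field_simps)
qed

lemma prob_all:
  assumes "measure_pmf.prob \<mu> {r. P r} \<le> q" "q \<ge> 0"
  shows "measure_pmf.prob (iidlist \<mu> j) {rs. \<forall>r\<in>set rs. P r} \<le> q ^ j"
proof (induction j)
  case 0
  then show ?case by simp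
next
  case (Suc j)
  have "measure_pmf.prob (iidlist \<mu> (Suc j)) {rs. \<forall>r\<in>set rs. P r}
      \<le> measure_pmf.prob \<mu> {r. P r} * q ^ j + 0"
    unfolding iidlist.simps
  proof (rule bind_bound)
    fix r show "measure_pmf.prob (map_pmf ((#) r) (iidlist \<mu> j)) {rs. \<forall>r\<in>set rs. P r}
      \<le> (if r \<in> {r. P r} then q ^ j else 0) + 0"
      using Suc by (auto simp: vimage_def)
  qed (use assms in auto)
  also have "\<dots> \<le> q ^ Suc j" using assms by (simp add: mult_right_mono)
  finally show ?case .
qed

fun eqP :: "(bool list \<Rightarrow> bool) list \<Rightarrow> ('a \<Rightarrow> bool list) \<Rightarrow> ('b \<Rightarrow> bool list) \<Rightarrow> ('a, 'b, bool) protocol" where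
  "eqP [] fa fb = PLeaf True"
| "eqP (h # hs) fa fb = PAlice (\<lambda>x. h (fa x))
     (PBob (\<lambda>y. h (fb y)) (eqP hs fa fb) (PLeaf False))
     (PBob (\<lambda>y. h (fb y)) (PLeaf False) (eqP hs fa fb))"

lemma run_eqP: "prot_run (eqP hs fa fb) x y = (\<forall>h\<in>set hs. h (fa x) = h (fb y))"
  by (induction hs) auto

lemma cost_eqP: "prot_cost (eqP hs fa fb) \<le> 2 * length hs"
  by (induction hs) auto

lemma prob_mono_supp:
  assumes "\<And>x. x \<in> set_pmf p \<Longrightarrow> x \<in> A \<Longrightarrow> x \<in> B"
  shows "measure_pmf.prob p A \<le> measure_pmf.prob p B"
proof -
  have "measure_pmf.prob p A = measure_pmf.prob p (A \<inter> set_pmf p)"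
    by (simp add: measure_Int_set_pmf)
  also have "\<dots> \<le> measure_pmf.prob p B"
    using assms by (intro measure_pmf.finite_measure_mono) auto
  finally show ?thesis .
qed

definition Et :: "nat \<Rightarrow> nat \<Rightarrow> ('a \<Rightarrow> bool list) \<Rightarrow> ('b \<Rightarrow> bool list) \<Rightarrow> (bool list \<Rightarrow> bool) list \<Rightarrow> ('a, 'b, bool) protocol" where
  "Et N k fa fb hs = (if k \<le> N then eqP (take 6 hs) (\<lambda>x. take k (fa x)) (\<lambda>y. take k (fb y)) else PLeaf False)"

definition lo :: "nat \<Rightarrow> bool list \<Rightarrow> nat" where "lo H u = bval u * 2 ^ (H - length u)"
definition hi :: "nat \<Rightarrow> bool list \<Rightarrow> nat" where "hi H u = (bval u + 1) * 2 ^ (H - length u)"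
definition mid :: "nat \<Rightarrow> bool list \<Rightarrow> nat" where "mid H u = (2 * bval u + 1) * 2 ^ (H - length u - 1)"

definition wP :: "nat \<Rightarrow> nat \<Rightarrow> ('a \<Rightarrow> bool list) \<Rightarrow> ('b \<Rightarrow> bool list) \<Rightarrow> bool list \<times> nat \<Rightarrow> (bool list \<Rightarrow> bool) list \<Rightarrow> ('a, 'b, bool list \<times> nat) protocol" where
  "wP N H fa fb s hs =
    pbind (Et N (lo H (fst s)) fa fb hs) (\<lambda>e1. pbind (Et N (hi H (fst s)) fa fb hs) (\<lambda>e2.
      pbind (Et N (mid H (fst s)) fa fb hs) (\<lambda>e3. PLeaf (wstep H s (e1 \<and> \<not> e2) e3))))"

definition gtP :: "nat \<Rightarrow> nat \<Rightarrow> nat \<Rightarrow> ('a \<Rightarrow> bool list) \<Rightarrow> ('b \<Rightarrow> bool list) \<Rightarrow> (bool list \<Rightarrow> bool) list list \<Rightarrow> ('a, 'b, bool) protocol" where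
  "gtP N H T fa fb rss = pbind (iterP (wP N H fa fb) ([], 0) (take T rss))
     (\<lambda>s. if bval (fst s) < N then PAlice (\<lambda>x. fa x ! bval (fst s)) (PLeaf True) (PLeaf False) else PLeaf False)"

lemma cost_Et: "prot_cost (Et N k fa fb hs) \<le> 12"
  using cost_eqP[of "take 6 hs" "\<lambda>x. take k (fa x)" "\<lambda>y. take k (fb y)"] by (auto simp: Et_def)

lemma cost_wP: "prot_cost (wP N H fa fb s hs) \<le> 36"
proof -
  have h3: "prot_cost (pbind (Et N (mid H (fst s)) fa fb hs) (\<lambda>e3. PLeaf (wstep H s (e1 \<and> \<not> e2) e3))) \<le> 12" for e1 e2
    using cost_pbind[of "\<lambda>e3. PLeaf (wstep H s (e1 \<and> \<not> e2) e3)" 0 "Et N (mid H (fst s)) fa fb hs"] cost_Et[of N "mid H (fst s)" fa fb hs]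
    by simp
  have h2: "prot_cost (pbind (Et N (hi H (fst s)) fa fb hs) (\<lambda>e2. pbind (Et N (mid H (fst s)) fa fb hs) (\<lambda>e3. PLeaf (wstep H s (e1 \<and> \<not> e2) e3)))) \<le> 24" for e1
  proof -
    have "prot_cost (pbind (Et N (hi H (fst s)) fa fb hs) (\<lambda>e2. pbind (Et N (mid H (fst s)) fa fb hs) (\<lambda>e3. PLeaf (wstep H s (e1 \<and> \<not> e2) e3))))
       \<le> prot_cost (Et N (hi H (fst s)) fa fb hs) + 12"
      by (rule cost_pbind) (rule h3)
    then show ?thesis using cost_Et[of N "hi H (fst s)" fa fb hs] by simp
  qed
  have "prot_cost (wP N H fa fb s hs) \<le> prot_cost (Et N (lo H (fst s)) fa fb hs) + 24"
    unfolding wP_def by (rule cost_pbind) (rule h2)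
  then show ?thesis using cost_Et[of N "lo H (fst s)" fa fb hs] by simp
qed

lemma cost_gtP: "prot_cost (gtP N H T fa fb rss) \<le> 36 * T + 1"
proof -
  have "prot_cost (gtP N H T fa fb rss) \<le> prot_cost (iterP (wP N H fa fb) ([], 0) (take T rss)) + 1"
    unfolding gtP_def by (rule cost_pbind) auto
  also have "\<dots> \<le> length (take T rss) * 36 + 1"
  proof -
    have "prot_cost (iterP (wP N H fa fb) ([], 0) (take T rss)) \<le> length (take T rss) * 36"
      by (rule cost_iterP) (rule cost_wP)
    then show ?thesis by linarith
  qed
  also have "\<dots> \<le> 36 * T + 1" by simp
  finally show ?thesis .
qed

lemma run_Et: "prot_run (Et N k fa fb hs) x y = (k \<le> N \<and> (\<forall>h\<in>set (take 6 hs). h (take k (fa x)) = h (take k (fb y))))"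
  by (simp add: Et_def run_eqP)

lemma wgood_intro:
  assumes "winv H s" "L < 2 ^ H"
  shows "wgood (bitsN H L) s (lo H (fst s) \<le> L \<and> \<not> hi H (fst s) \<le> L) (mid H (fst s) \<le> L)"
proof -
  obtain u c where s: "s = (u, c)" by force
  have lu: "length u \<le> H" using assms by (simp add: winv_def s)
  have p: "pref u (bitsN H L) \<longleftrightarrow> lo H u \<le> L \<and> \<not> hi H u \<le> L"
    using pref_bits_interval[OF lu assms(2)] by (auto simp: lo_def hi_def)
  have "t ! length u = (mid H u \<le> L)" if pu: "pref u (bitsN H L)" and lt: "length u < H"
    and t: "t = bitsN H L" for t
  proof -
    have l1: "length (u @ [True]) \<le> H" using lt by simp
    have e: "2 ^ (H - length u) = 2 * (2::nat) ^ (H - length u - 1)"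
      using lt by (metis Suc_diff_Suc diff_Suc_1 power_Suc zero_less_diff)
    have "pref (u @ [True]) (bitsN H L) \<longleftrightarrow> mid H u \<le> L \<and> L < hi H u"
      using pref_bits_interval[OF l1 assms(2)] e
      by (simp add: bval_snoc mid_def hi_def algebra_simps)
    moreover have "L < hi H u" using p pu by simp
    moreover have "pref (u @ [True]) (bitsN H L) \<longleftrightarrow> True = t ! length u"
      using pref_snoc[OF pu, of True] lt t by simp
    ultimately show ?thesis by (simp add: t)
  qed
  then show ?thesis using p by (auto simp: wgood_def s)
qed

lemma pmf_union: "measure_pmf.prob p (A \<union> B) \<le> measure_pmf.prob p A + measure_pmf.prob p B"
  by (rule measure_subadditive) (auto simp: measure_pmf.emeasure_eq_measure)

lemma Ev_wrong:
  assumes "length xs = N" "length ys = N"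
  shows "measure_pmf.prob (iidlist (muh N) 6)
     {r. (k \<le> N \<and> (\<forall>h\<in>set (take 6 r). h (take k xs) = h (take k ys))) \<noteq> (k \<le> lcp xs ys)} \<le> 1/64"
proof (cases "k \<le> lcp xs ys")
  case True
  then have "k \<le> N" using lcp_le1[of xs ys] assms by simp
  then have "take k xs = take k ys" using lcp_take[of k xs ys] True assms by simp
  then show ?thesis using True \<open>k \<le> N\<close> by simp
next
  case False
  show ?thesis
  proof (cases "k \<le> N")
    case kN: True
    then have ne: "take k xs \<noteq> take k ys" using lcp_take[of k xs ys] False assms by simp
    have "measure_pmf.prob (iidlist (muh N) 6)
     {r. (k \<le> N \<and> (\<forall>h\<in>set (take 6 r). h (take k xs) = h (take k ys))) \<noteq> (k \<le> lcp xs ys)}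
     \<le> measure_pmf.prob (iidlist (muh N) 6) {r. \<forall>h\<in>set r. h (take k xs) = h (take k ys)}"
    proof (rule prob_mono_supp)
      fix r assume r: "r \<in> set_pmf (iidlist (muh N) 6)"
        "r \<in> {r. (k \<le> N \<and> (\<forall>h\<in>set (take 6 r). h (take k xs) = h (take k ys))) \<noteq> (k \<le> lcp xs ys)}"
      have "length r = 6" using r(1) by (rule set_iidlist)
      then show "r \<in> {r. \<forall>h\<in>set r. h (take k xs) = h (take k ys)}" using r(2) False by simp
    qed
    also have "\<dots> \<le> (1/2) ^ 6"
      by (rule prob_all, rule muh_collision[OF ne]) (use assms in auto)
    also have "(1/2::real) ^ 6 = 1/64" by (simp add: power_one_over)
    finally show ?thesis .
  next
    case F2: False
    then show ?thesis using False by simp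
  qed
qed

lemma gt_prob:
  assumes lx: "length (fa x) = N" and ly: "length (fb y) = N" and NH: "N < 2 ^ H"
  shows "measure_pmf.prob (iidlist (iidlist (muh N) 6) (3*H+3*r))
    {rss. prot_run (gtP N H (3*H+3*r) fa fb rss) x y \<noteq> (lcp (fa x) (fb y) < N \<and> fa x ! lcp (fa x) (fb y))}
    \<le> (1/2) ^ r"
proof -
  define xs where "xs = fa x"
  define ys where "ys = fb y"
  define L where "L = lcp xs ys"
  define t where "t = bitsN H L"
  define T where "T = 3*H+3*r"
  have LN: "L \<le> N" using lcp_le1[of xs ys] lx by (simp add: L_def xs_def)
  have LH: "L < 2 ^ H" using LN NH by simp
  have lt: "length t = H" by (simp add: t_def)
  define Ev where "Ev k r = (k \<le> N \<and> (\<forall>h\<in>set (take 6 r). h (take k xs) = h (take k ys)))" for k and r :: "(bool list \<Rightarrow> bool) list"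
  define f where "f = (\<lambda>s r. prot_run (wP N H fa fb s r) x y)"
  have f_eq: "f s r = wstep H s (Ev (lo H (fst s)) r \<and> \<not> Ev (hi H (fst s)) r) (Ev (mid H (fst s)) r)" for s r
    by (simp only: f_def wP_def run_pbind run_Et Ev_def xs_def ys_def prot_run.simps)
  define bd where "bd s r = (winv H s \<and> \<not> wgood t s (Ev (lo H (fst s)) r \<and> \<not> Ev (hi H (fst s)) r) (Ev (mid H (fst s)) r))" for s r
  define W where "W k = {r. Ev k r \<noteq> (k \<le> L)}" for k
  have W: "measure_pmf.prob (iidlist (muh N) 6) (W k) \<le> 1/64" for k
    using Ev_wrong[of xs N ys k] lx ly unfolding W_def Ev_def L_def xs_def ys_def by simp
  have bdp: "measure_pmf.prob (iidlist (muh N) 6) {r. bd s r} \<le> 3/64" for s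
  proof -
    have "{r. bd s r} \<subseteq> W (lo H (fst s)) \<union> W (hi H (fst s)) \<union> W (mid H (fst s))"
    proof
      fix r assume "r \<in> {r. bd s r}"
      then have ws: "winv H s" and ng: "\<not> wgood t s (Ev (lo H (fst s)) r \<and> \<not> Ev (hi H (fst s)) r) (Ev (mid H (fst s)) r)"
        by (auto simp: bd_def)
      show "r \<in> W (lo H (fst s)) \<union> W (hi H (fst s)) \<union> W (mid H (fst s))"
      proof (rule ccontr)
        assume "\<not> ?thesis"
        then have "Ev (lo H (fst s)) r = (lo H (fst s) \<le> L)" "Ev (hi H (fst s)) r = (hi H (fst s) \<le> L)"
          "Ev (mid H (fst s)) r = (mid H (fst s) \<le> L)" by (auto simp: W_def)
        then show False using ng wgood_intro[OF ws LH] by (simp add: t_def)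
      qed
    qed
    then have "measure_pmf.prob (iidlist (muh N) 6) {r. bd s r}
       \<le> measure_pmf.prob (iidlist (muh N) 6) (W (lo H (fst s)) \<union> W (hi H (fst s)) \<union> W (mid H (fst s)))"
      by (rule measure_pmf.finite_measure_mono) simp
    also have "\<dots> \<le> measure_pmf.prob (iidlist (muh N) 6) (W (lo H (fst s)) \<union> W (hi H (fst s))) + measure_pmf.prob (iidlist (muh N) 6) (W (mid H (fst s)))"
      by (rule pmf_union)
    also have "\<dots> \<le> measure_pmf.prob (iidlist (muh N) 6) (W (lo H (fst s))) + measure_pmf.prob (iidlist (muh N) 6) (W (hi H (fst s))) + measure_pmf.prob (iidlist (muh N) 6) (W (mid H (fst s)))"
      using pmf_union[of "iidlist (muh N) 6" "W (lo H (fst s))" "W (hi H (fst s))"] by simp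
    also have "\<dots> \<le> 3/64" using W[of "lo H (fst s)"] W[of "hi H (fst s)"] W[of "mid H (fst s)"] by simp
    finally show ?thesis .
  qed
  have run: "prot_run (gtP N H T fa fb rss) x y =
     (bval (fst (runS f ([], 0) (take T rss))) < N \<and> xs ! bval (fst (runS f ([], 0) (take T rss))))" for rss
    by (simp add: gtP_def run_pbind run_iterP f_def xs_def)
  have det: "prot_run (gtP N H T fa fb rss) x y = (L < N \<and> xs ! L)"
    if nb: "nbadS f bd ([], 0) rss \<le> H + r" and len: "length rss = T" for rss
  proof -
    have inv0: "winv H ([], 0)" by (simp add: winv_def)
    have pr: "winv H (runS f ([], 0) rss) \<and> phi t (runS f ([], 0) rss) \<le> phi t ([], 0) - int (length rss) + 2 * int (nbadS f bd ([], 0) rss)"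
    proof (rule potential_run[where Inv="winv H"])
      show "winv H (f s r)" if "winv H s" for s r unfolding f_eq by (rule wstep_inv[OF that])
      show "phi t (f s r) \<le> phi t s - 1" if a: "winv H s" "\<not> bd s r" for s r
      proof -
        have w: "wgood t s (Ev (lo H (fst s)) r \<and> \<not> Ev (hi H (fst s)) r) (Ev (mid H (fst s)) r)"
          using a by (simp add: bd_def)
        have "winv (length t) s" using a lt by simp
        from wstep_good[OF this w] show ?thesis unfolding f_eq lt .
      qed
      show "phi t (f s r) \<le> phi t s + 1" if a: "winv H s" for s r
      proof -
        have "winv (length t) s" using a lt by simp
        from wstep_any[OF this] show ?thesis unfolding f_eq lt .
      qed
    qed (rule inv0)
    have p0: "phi t ([], 0) = int H" using lt by (cases t) (auto simp: phi_def)
    have ph: "phi t (runS f ([], 0) rss) \<le> 0" using pr p0 nb len by (simp add: T_def)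
    have ll: "length (fst (runS f ([], 0) rss)) \<le> length t" using pr lt by (simp add: winv_def)
    have ft: "fst (runS f ([], 0) rss) = t"
    proof (rule ccontr)
      assume "fst (runS f ([], 0) rss) \<noteq> t"
      from phi_pos[OF this ll] ph show False by linarith
    qed
    have bt: "bval t = L" using LH by (simp add: t_def bval_bitsN take_bit_nat_eq_self)
    show ?thesis using run[of rss] len ft bt by simp
  qed
  have "measure_pmf.prob (iidlist (iidlist (muh N) 6) T)
    {rss. prot_run (gtP N H T fa fb rss) x y \<noteq> (L < N \<and> xs ! L)}
    \<le> measure_pmf.prob (iidlist (iidlist (muh N) 6) T) {rss. H + r + 1 \<le> nbadS f bd ([], 0) rss}"
  proof (rule prob_mono_supp)
    fix rss assume r: "rss \<in> set_pmf (iidlist (iidlist (muh N) 6) T)"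
      "rss \<in> {rss. prot_run (gtP N H T fa fb rss) x y \<noteq> (L < N \<and> xs ! L)}"
    have "length rss = T" using r(1) by (rule set_iidlist)
    then show "rss \<in> {rss. H + r + 1 \<le> nbadS f bd ([], 0) rss}" using r(2) det[of rss] by force
  qed
  also have "\<dots> \<le> real (T choose (H + r + 1)) * (3/64) ^ (H + r + 1)"
    by (rule tail_bound) (use bdp in auto)
  also have "\<dots> \<le> 2 ^ T * (1/16) ^ (H + r + 1)"
  proof (rule mult_mono)
    show "real (T choose (H + r + 1)) \<le> 2 ^ T"
      using binomial_le_pow2[of T "H+r+1"] by (metis of_nat_le_iff of_nat_numeral of_nat_power)
    show "(3/64::real) ^ (H + r + 1) \<le> (1/16) ^ (H + r + 1)"
      by (rule power_mono) auto
  qed auto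
  also have "\<dots> = (1/2) ^ (H + r + 4)"
  proof -
    have "(1/2::real) ^ (4 * (H + r + 1)) = ((1/2) ^ 4) ^ (H + r + 1)"
      by (rule power_mult)
    moreover have "(1/2::real) ^ 4 = 1/16" by (simp add: power_divide)
    ultimately have "(1/16::real) ^ (H + r + 1) = (1/2) ^ (4 * (H + r + 1))"
      by simp
    also have "4 * (H + r + 1) = T + (H + r + 4)" by (simp add: T_def)
    finally have "(1/16::real) ^ (H + r + 1) = (1/2) ^ T * (1/2) ^ (H + r + 4)"
      by (simp add: power_add)
    then show ?thesis by (simp add: power_one_over)
  qed
  also have "\<dots> \<le> (1/2) ^ r" by (rule power_decreasing) auto
  finally show ?thesis by (simp add: T_def L_def xs_def ys_def)
qed

lemma lhs_val_add: assumes "length a1 = length a2" shows "lhs_val (map2 (+) a1 a2) \<alpha> = lhs_val a1 \<alpha> + lhs_val a2 \<alpha>"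
proof -
  have "lhs_val (map2 (+) a1 a2) \<alpha> = (\<Sum>i<length a1. a1 ! i * of_bool (\<alpha> i) + a2 ! i * of_bool (\<alpha> i))"
    unfolding lhs_val_def using assms by (intro sum.cong) (auto simp: algebra_simps)
  also have "\<dots> = lhs_val a1 \<alpha> + lhs_val a2 \<alpha>"
    unfolding lhs_val_def sum.distrib using assms by simp
  finally show ?thesis .
qed

lemma lhs_val_mult: "lhs_val (map (\<lambda>x. d * x) a) \<alpha> = d * lhs_val a \<alpha>"
  unfolding lhs_val_def sum_distrib_left by (intro sum.cong) (auto simp: algebra_simps)

lemma lhs_val_div: "(\<forall>x\<in>set a. e dvd x) \<Longrightarrow> e * lhs_val (map (\<lambda>x. x div e) a) \<alpha> = lhs_val a \<alpha>"
  unfolding lhs_val_def sum_distrib_left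
  by (rule sum.cong) (auto simp: algebra_simps)

lemma lhs_val_cong: "(\<And>i. i < length a \<Longrightarrow> \<alpha> i = \<beta> i) \<Longrightarrow> lhs_val a \<alpha> = lhs_val a \<beta>"
  unfolding lhs_val_def by (rule sum.cong) auto

fun lineT :: "cp_tree \<Rightarrow> ineq" where
  "lineT (CP_Ax l) = l"
| "lineT (CP_Add T1 T2) = (map2 (+) (fst (lineT T1)) (fst (lineT T2)), snd (lineT T1) + snd (lineT T2))"
| "lineT (CP_Mult d T) = (map (\<lambda>x. d * x) (fst (lineT T)), d * snd (lineT T))"
| "lineT (CP_Div e T) = (map (\<lambda>x. x div e) (fst (lineT T)), snd (lineT T) div e)"

datatype stree = SAx ineq | SHole | SUn ineq stree | SBin ineq stree stree

fun conv :: "cp_tree \<Rightarrow> stree" where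
  "conv (CP_Ax l) = SAx l"
| "conv (CP_Add T1 T2) = SBin (lineT (CP_Add T1 T2)) (conv T1) (conv T2)"
| "conv (CP_Mult d T) = SUn (lineT (CP_Mult d T)) (conv T)"
| "conv (CP_Div e T) = SUn (lineT (CP_Div e T)) (conv T)"

fun wt :: "stree \<Rightarrow> nat" where
  "wt (SAx l) = 1"
| "wt SHole = 0"
| "wt (SUn l t) = wt t"
| "wt (SBin l a b) = wt a + wt b"

fun rline :: "stree \<Rightarrow> ineq" where
  "rline (SAx l) = l"
| "rline SHole = ([], 0)"
| "rline (SUn l t) = l"
| "rline (SBin l a b) = l"

definition fals :: "(nat \<Rightarrow> bool) \<Rightarrow> ineq \<Rightarrow> bool" where
  "fals \<alpha> l = (\<not> sat_ineq \<alpha> l)"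

definition fr :: "(nat \<Rightarrow> bool) \<Rightarrow> stree \<Rightarrow> bool" where
  "fr \<alpha> S = (S \<noteq> SHole \<and> fals \<alpha> (rline S))"

fun valid :: "nat \<Rightarrow> ineq set \<Rightarrow> (nat \<Rightarrow> bool) \<Rightarrow> stree \<Rightarrow> bool" where
  "valid n I \<alpha> (SAx l) = (l \<in> I \<and> length (fst l) = n)"
| "valid n I \<alpha> SHole = True"
| "valid n I \<alpha> (SUn l t) = (length (fst l) = n \<and> valid n I \<alpha> t \<and> (fals \<alpha> l \<longrightarrow> fr \<alpha> t))"
| "valid n I \<alpha> (SBin l a b) = (length (fst l) = n \<and> valid n I \<alpha> a \<and> valid n I \<alpha> b \<and> (fals \<alpha> l \<longrightarrow> fr \<alpha> a \<or> fr \<alpha> b))"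

fun the_ax :: "stree \<Rightarrow> ineq" where
  "the_ax (SAx l) = l"
| "the_ax SHole = ([], 0)"
| "the_ax (SUn l t) = the_ax t"
| "the_ax (SBin l a b) = (if wt a \<noteq> 0 then the_ax a else the_ax b)"

lemma conv_ne: "conv T \<noteq> SHole"
  by (cases T) auto

lemma rline_conv: "rline (conv T) = lineT T"
  by (cases T) auto

lemma derives_line': "cp_derives I T l \<Longrightarrow> lineT T = l"
  by (induction rule: cp_derives.induct) auto

lemma derives_line: "cp_derives I T l \<Longrightarrow> l = lineT T"
  using derives_line' by metis

lemma derives_valid:
  assumes "cp_derives I T l" "wf_system n I"
  shows "valid n I \<alpha> (conv T) \<and> length (fst l) = n"
  using assms(1)
proof (induction rule: cp_derives.induct)
  case (ax l)
  then show ?case using assms(2) by (auto simp: wf_system_def)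
next
  case (add T1 a1 c1 T2 a2 c2)
  have l1: "lineT T1 = (a1, c1)" and l2: "lineT T2 = (a2, c2)"
    using add.hyps derives_line by metis+
  have "fals \<alpha> (lineT (CP_Add T1 T2)) \<longrightarrow> fals \<alpha> (a1, c1) \<or> fals \<alpha> (a2, c2)"
    using lhs_val_add[OF add.hyps(3), of \<alpha>] by (auto simp: fals_def sat_ineq_def l1 l2)
  then show ?case using add conv_ne l1 l2 by (auto simp: fr_def rline_conv)
next
  case (mult T a c d)
  have l1: "lineT T = (a, c)" using mult.hyps derives_line by metis
  have "fals \<alpha> (lineT (CP_Mult d T)) \<longrightarrow> fals \<alpha> (a, c)"
    using lhs_val_mult[of d a \<alpha>] mult.hyps(2) by (auto simp: fals_def sat_ineq_def l1)
  then show ?case using mult conv_ne l1 by (auto simp: fr_def rline_conv)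
next
  case (rdiv T a c e)
  have l1: "lineT T = (a, c)" using rdiv.hyps derives_line by metis
  have "fals \<alpha> (lineT (CP_Div e T)) \<longrightarrow> fals \<alpha> (a, c)"
  proof
    assume f: "fals \<alpha> (lineT (CP_Div e T))"
    show "fals \<alpha> (a, c)"
    proof (rule ccontr)
      assume "\<not> fals \<alpha> (a, c)"
      then have "e * lhs_val (map (\<lambda>x. x div e) a) \<alpha> \<le> c"
        using lhs_val_div[OF rdiv.hyps(3), of \<alpha>] by (simp add: fals_def sat_ineq_def)
      then have "(e * lhs_val (map (\<lambda>x. x div e) a) \<alpha>) div e \<le> c div e"
        by (rule zdiv_mono1) (use rdiv.hyps(2) in simp)
      then have "lhs_val (map (\<lambda>x. x div e) a) \<alpha> \<le> c div e" using rdiv.hyps(2) by simp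
      then show False using f by (simp add: fals_def sat_ineq_def l1)
    qed
  qed
  then show ?case using rdiv conv_ne l1 by (auto simp: fr_def rline_conv)
qed

lemma fr_wt: "valid n I \<alpha> S \<Longrightarrow> fr \<alpha> S \<Longrightarrow> wt S \<ge> 1"
proof (induction S)
  case (SBin l a b)
  then show ?case by (auto simp: fr_def)
qed (auto simp: fr_def)

lemma the_ax_ok: "valid n I \<alpha> S \<Longrightarrow> fr \<alpha> S \<Longrightarrow> wt S \<le> 1 \<Longrightarrow> the_ax S \<in> I \<and> fals \<alpha> (the_ax S)"
proof (induction S)
  case (SAx l)
  then show ?case by (simp add: fr_def)
next
  case SHole
  then show ?case by (simp add: fr_def)
next
  case (SUn l t)
  then show ?case by (simp add: fr_def)
next
  case (SBin l a b)
  have "fr \<alpha> a \<or> fr \<alpha> b" using SBin.prems by (simp add: fr_def)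
  then show ?case
  proof
    assume fa: "fr \<alpha> a"
    then have "wt a \<ge> 1" using fr_wt SBin.prems by auto
    then show ?thesis using SBin fa by auto
  next
    assume fb: "fr \<alpha> b"
    then have "wt b \<ge> 1" using fr_wt SBin.prems by auto
    then have "wt a = 0" using SBin.prems by simp
    then show ?thesis using SBin fb by auto
  qed
qed

fun split :: "nat \<Rightarrow> stree \<Rightarrow> stree \<times> stree" where
  "split m (SUn l t) = (let (c, t') = split m t in (c, SUn l t'))"
| "split m (SBin l a b) =
    (if wt b \<le> wt a then
       (if 3 * wt a \<le> 2 * m then (a, SBin l SHole b) else (let (c, a') = split m a in (c, SBin l a' b)))
     else
       (if 3 * wt b \<le> 2 * m then (b, SBin l a SHole) else (let (c, b') = split m b in (c, SBin l a b'))))"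
| "split m S = (S, SHole)"

lemma split_props:
  assumes "3 * wt S > 2 * m" "m \<ge> 2" "split m S = (c, S')"
  shows "3 * wt c > m \<and> 3 * wt c \<le> 2 * m \<and> wt S' + wt c = wt S
    \<and> (valid n I \<alpha> S \<longrightarrow> valid n I \<alpha> c)
    \<and> (valid n I \<alpha> S \<and> \<not> fr \<alpha> c \<longrightarrow> valid n I \<alpha> S' \<and> fr \<alpha> S' = fr \<alpha> S)"
  using assms
proof (induction m S arbitrary: c S' rule: split.induct)
  case (1 m l t)
  obtain c0 t0 where sp: "split m t = (c0, t0)" by force
  then show ?case using 1 by (auto simp: fr_def)
next
  case (2 m l a b)
  show ?case
  proof (cases "wt b \<le> wt a")
    case True
    show ?thesis
    proof (cases "3 * wt a \<le> 2 * m")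
      case T2: True
      then show ?thesis using 2(3-) True by (auto simp: fr_def)
    next
      case F2: False
      obtain c0 a0 where sp: "split m a = (c0, a0)" by force
      show ?thesis using 2(3-) True F2 sp 2(1)[OF True F2] by (auto simp: fr_def)
    qed
  next
    case False
    show ?thesis
    proof (cases "3 * wt b \<le> 2 * m")
      case T2: True
      then show ?thesis using 2(3-) False by (auto simp: fr_def)
    next
      case F2: False
      obtain c0 b0 where sp: "split m b = (c0, b0)" by force
      show ?thesis using 2(3-) False F2 sp 2(2)[OF False F2] by (auto simp: fr_def)
    qed
  qed
qed auto

definition Bn :: "nat \<Rightarrow> (nat \<Rightarrow> bool) set" where
  "Bn n = {z. \<forall>i. z i \<longrightarrow> i < n}"

lemma Bn_eq: "Bn n = (\<lambda>A i. i \<in> A) ` Pow {..<n}"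
proof (intro equalityI subsetI)
  fix z assume "z \<in> Bn n"
  then show "z \<in> (\<lambda>A i. i \<in> A) ` Pow {..<n}"
    by (intro image_eqI[where x="{i. z i}"]) (auto simp: Bn_def)
qed (auto simp: Bn_def)

lemma finite_Bn: "finite (Bn n)" by (simp add: Bn_eq)

lemma card_Bn: "card (Bn n) \<le> 2 ^ n"
proof -
  have "card (Bn n) \<le> card (Pow {..<n::nat})" unfolding Bn_eq by (rule card_image_le) simp
  then show ?thesis by (simp add: card_Pow)
qed

definition SA :: "nat set \<Rightarrow> int list \<Rightarrow> (nat \<Rightarrow> bool) \<Rightarrow> int" where
  "SA P1 a x = (\<Sum>i<length a. a ! i * of_bool (i \<in> P1 \<and> x i))"
definition SB :: "nat set \<Rightarrow> int list \<Rightarrow> (nat \<Rightarrow> bool) \<Rightarrow> int" where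
  "SB P1 a y = (\<Sum>i<length a. a ! i * of_bool (i \<notin> P1 \<and> y i))"

definition Vset :: "nat \<Rightarrow> nat set \<Rightarrow> ineq \<Rightarrow> int set" where
  "Vset n P1 l = SA P1 (fst l) ` Bn n \<union> (\<lambda>y. snd l - SB P1 (fst l) y) ` Bn n"

definition rank :: "int set \<Rightarrow> int \<Rightarrow> nat" where
  "rank V v = card {u\<in>V. u < v}"

definition qa :: "nat \<Rightarrow> nat set \<Rightarrow> ineq \<Rightarrow> (nat \<Rightarrow> bool) \<Rightarrow> bool list" where
  "qa n P1 l x = bitsN (Suc n) (rank (Vset n P1 l) (SA P1 (fst l) x))"
definition qb :: "nat \<Rightarrow> nat set \<Rightarrow> ineq \<Rightarrow> (nat \<Rightarrow> bool) \<Rightarrow> bool list" where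
  "qb n P1 l y = bitsN (Suc n) (rank (Vset n P1 l) (snd l - SB P1 (fst l) y))"

lemma finite_Vset: "finite (Vset n P1 l)"
  by (simp add: Vset_def finite_Bn)

lemma card_Vset: "card (Vset n P1 l) \<le> 2 ^ Suc n"
proof -
  have "card (Vset n P1 l) \<le> card (SA P1 (fst l) ` Bn n) + card ((\<lambda>y. snd l - SB P1 (fst l) y) ` Bn n)"
    unfolding Vset_def by (rule card_Un_le)
  also have "\<dots> \<le> card (Bn n) + card (Bn n)" by (intro add_mono card_image_le finite_Bn)
  also have "\<dots> \<le> 2 ^ Suc n" using card_Bn[of n] by simp
  finally show ?thesis .
qed

lemma rank_less: "finite V \<Longrightarrow> v \<in> V \<Longrightarrow> rank V v < card V"
  unfolding rank_def by (rule psubset_card_mono) auto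

lemma rank_mono_iff:
  assumes "finite V" "u \<in> V" "v \<in> V"
  shows "rank V u < rank V v \<longleftrightarrow> u < v"
proof
  assume "u < v"
  then show "rank V u < rank V v" unfolding rank_def
    using assms by (intro psubset_card_mono) auto
next
  assume a: "rank V u < rank V v"
  show "u < v"
  proof (rule ccontr)
    assume "\<not> u < v"
    then have "{w\<in>V. w < v} \<subseteq> {w\<in>V. w < u}" by auto
    then have "rank V v \<le> rank V u" unfolding rank_def using assms by (intro card_mono) auto
    then show False using a by simp
  qed
qed

lemma query_truth:
  assumes P1: "P1 \<subseteq> {..<n}" and len: "length (fst l) = n"
    and x: "x = restrict_to P1 \<alpha>" and y: "y = restrict_to ({..<n} - P1) \<alpha>"
  shows "fals \<alpha> l \<longleftrightarrow> (lcp (qa n P1 l x) (qb n P1 l y) < Suc n \<and> qa n P1 l x ! lcp (qa n P1 l x) (qb n P1 l y))"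
proof -
  obtain a c where l: "l = (a, c)" by force
  have xB: "x \<in> Bn n" using P1 by (auto simp: x Bn_def restrict_to_def)
  have yB: "y \<in> Bn n" by (auto simp: y Bn_def restrict_to_def)
  have split: "lhs_val a \<alpha> = SA P1 a x + SB P1 a y"
    unfolding lhs_val_def SA_def SB_def sum.distrib[symmetric]
    by (rule sum.cong) (use len in \<open>auto simp: l x y restrict_to_def\<close>)
  define V where "V = Vset n P1 l"
  have fV: "finite V" by (simp add: V_def finite_Vset)
  have u: "SA P1 a x \<in> V" using xB by (auto simp: V_def Vset_def l)
  have v: "c - SB P1 a y \<in> V" using yB by (auto simp: V_def Vset_def l)
  define X where "X = rank V (SA P1 a x)"
  define Y where "Y = rank V (c - SB P1 a y)"
  have X: "X < 2 ^ Suc n" using rank_less[OF fV u] card_Vset[of n P1 l] by (simp add: X_def V_def)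
  have Y: "Y < 2 ^ Suc n" using rank_less[OF fV v] card_Vset[of n P1 l] by (simp add: Y_def V_def)
  have "fals \<alpha> l \<longleftrightarrow> c - SB P1 a y < SA P1 a x"
    by (simp add: fals_def sat_ineq_def l split) linarith
  also have "\<dots> \<longleftrightarrow> Y < X" using rank_mono_iff[OF fV v u] by (simp add: X_def Y_def)
  also have "\<dots> \<longleftrightarrow> take_bit (Suc n) Y < take_bit (Suc n) X"
    using X Y by (simp add: take_bit_nat_eq_self)
  also have "\<dots> \<longleftrightarrow> (lcp (qa n P1 l x) (qb n P1 l y) < Suc n \<and> qa n P1 l x ! lcp (qa n P1 l x) (qb n P1 l y))"
    unfolding gt_bits qa_def qb_def X_def Y_def V_def l by simp
  finally show ?thesis .
qed

definition qP :: "nat \<Rightarrow> nat set \<Rightarrow> nat \<Rightarrow> nat \<Rightarrow> ineq \<Rightarrow> (bool list \<Rightarrow> bool) list list \<Rightarrow> (nat \<Rightarrow> bool, nat \<Rightarrow> bool, bool) protocol" where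
  "qP n P1 H Tin l rss = gtP (Suc n) H Tin (qa n P1 l) (qb n P1 l) rss"

definition oP :: "nat \<Rightarrow> nat set \<Rightarrow> nat \<Rightarrow> nat \<Rightarrow> stree \<Rightarrow> (bool list \<Rightarrow> bool) list list \<Rightarrow> (nat \<Rightarrow> bool, nat \<Rightarrow> bool, stree) protocol" where
  "oP n P1 H Tin S rss = (if wt S \<le> 1 then PLeaf S else
     pbind (qP n P1 H Tin (rline (fst (split (wt S) S))) rss)
       (\<lambda>b. PLeaf (if b then fst (split (wt S) S) else snd (split (wt S) S))))"

definition finP :: "nat \<Rightarrow> nat set \<Rightarrow> nat \<Rightarrow> nat \<Rightarrow> nat \<Rightarrow> stree \<Rightarrow> (bool list \<Rightarrow> bool) list list list \<Rightarrow> (nat \<Rightarrow> bool, nat \<Rightarrow> bool, ineq) protocol" where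
  "finP n P1 H Tin Q S0 rsss = pbind (iterP (oP n P1 H Tin) S0 (take Q rsss)) (\<lambda>S. PLeaf (the_ax S))"

lemma cost_oP: "prot_cost (oP n P1 H Tin S rss) \<le> 36 * Tin + 1"
proof (cases "wt S \<le> 1")
  case False
  have "prot_cost (oP n P1 H Tin S rss) \<le> prot_cost (qP n P1 H Tin (rline (fst (split (wt S) S))) rss) + 0"
  proof -
    have "oP n P1 H Tin S rss = pbind (qP n P1 H Tin (rline (fst (split (wt S) S))) rss)
       (\<lambda>b. PLeaf (if b then fst (split (wt S) S) else snd (split (wt S) S)))"
      using False by (simp add: oP_def)
    then show ?thesis by (simp only:) (rule cost_pbind, simp)
  qed
  also have "\<dots> \<le> 36 * Tin + 1" unfolding qP_def using cost_gtP by simp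
  finally show ?thesis .
qed (simp add: oP_def)

lemma cost_finP: "prot_cost (finP n P1 H Tin Q S0 rsss) \<le> Q * (36 * Tin + 1)"
proof -
  have "prot_cost (finP n P1 H Tin Q S0 rsss) \<le> prot_cost (iterP (oP n P1 H Tin) S0 (take Q rsss)) + 0"
    unfolding finP_def by (rule cost_pbind) simp
  also have "\<dots> \<le> length (take Q rsss) * (36 * Tin + 1)"
  proof -
    have "prot_cost (iterP (oP n P1 H Tin) S0 (take Q rsss)) \<le> length (take Q rsss) * (36 * Tin + 1)"
      by (rule cost_iterP) (rule cost_oP)
    then show ?thesis by simp
  qed
  also have "\<dots> \<le> Q * (36 * Tin + 1)" by (intro mult_le_mono1) simp
  finally show ?thesis .
qed

lemma wt_conv: "wt (conv T) \<le> cp_size T"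
  by (induction T) auto

lemma runS_fix: "(\<And>r. f S r = S) \<Longrightarrow> runS f S rs = S"
  by (induction rs) auto

lemma wt_decay:
  assumes hfix: "\<And>S r. wt S \<le> 1 \<Longrightarrow> f S r = S"
    and dec: "\<And>S r. wt S \<ge> 2 \<Longrightarrow> 3 * wt (f S r) \<le> 2 * wt S"
  shows "wt (runS f S rs) \<le> 1 \<or> 3 ^ length rs * wt (runS f S rs) \<le> 2 ^ length rs * wt S"
proof (induction rs arbitrary: S)
  case Nil then show ?case by simp
next
  case (Cons r rs)
  show ?case
  proof (cases "wt S \<le> 1")
    case True
    then have "runS f S (r # rs) = S" using runS_fix[of f S "r # rs"] hfix by blast
    then show ?thesis using True by simp
  next
    case False
    have d: "3 * wt (f S r) \<le> 2 * wt S" using dec False by simp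
    from Cons.IH[of "f S r"] show ?thesis
    proof
      assume "wt (runS f (f S r) rs) \<le> 1" then show ?thesis by simp
    next
      assume a: "3 ^ length rs * wt (runS f (f S r) rs) \<le> 2 ^ length rs * wt (f S r)"
      have "3 ^ length (r # rs) * wt (runS f S (r # rs)) = 3 * (3 ^ length rs * wt (runS f (f S r) rs))" by simp
      also have "\<dots> \<le> 3 * (2 ^ length rs * wt (f S r))" using a by simp
      also have "\<dots> = 2 ^ length rs * (3 * wt (f S r))" by simp
      also have "\<dots> \<le> 2 ^ length rs * (2 * wt S)" using d by simp
      also have "\<dots> = 2 ^ length (r # rs) * wt S" by simp
      finally show ?thesis by simp
    qed
  qed
qed

lemma valid_rline: "valid n I \<alpha> S \<Longrightarrow> S \<noteq> SHole \<Longrightarrow> length (fst (rline S)) = n"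
  by (cases S) auto

lemma outer_solves:
  assumes wf: "wf_system n I" and P1: "P1 \<subseteq> {..<n}" and der: "cp_derives I T l" and fl: "false_line l"
    and NH: "Suc n < 2 ^ H" and K: "cp_size T < 2 ^ K" and rQ: "real (2 * K) * (1/2) ^ r \<le> 1/3"
  shows "kw_rand_solves n I P1 (map_pmf (finP n P1 H (3*H+3*r) (2*K) (conv T))
           (iidlist (iidlist (iidlist (muh (Suc n)) 6) (3*H+3*r)) (2*K)))"
  unfolding kw_rand_solves_def
proof (intro allI)
  fix \<alpha> :: "nat \<Rightarrow> bool"
  define Tin where "Tin = 3*H+3*r"
  define Q where "Q = 2 * K"
  define M where "M = iidlist (iidlist (iidlist (muh (Suc n)) 6) Tin) Q"
  define x where "x = restrict_to P1 \<alpha>"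
  define y where "y = restrict_to ({..<n} - P1) \<alpha>"
  define S0 where "S0 = conv T"
  define cS where "cS S = fst (split (wt S) S)" for S
  define dS where "dS S = snd (split (wt S) S)" for S
  define f where "f = (\<lambda>S rss. prot_run (oP n P1 H Tin S rss) x y)"
  define truth where "truth l' = (lcp (qa n P1 l' x) (qb n P1 l' y) < Suc n \<and> qa n P1 l' x ! lcp (qa n P1 l' x) (qb n P1 l' y))" for l'
  define bd where "bd S rss = (\<not> wt S \<le> 1 \<and> prot_run (qP n P1 H Tin (rline (cS S)) rss) x y \<noteq> truth (rline (cS S)))" for S rss
  have f_eq: "f S rss = (if wt S \<le> 1 then S else if prot_run (qP n P1 H Tin (rline (cS S)) rss) x y then cS S else dS S)" for S rss
    by (simp add: f_def oP_def run_pbind cS_def dS_def)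
  have bdp: "measure_pmf.prob (iidlist (iidlist (muh (Suc n)) 6) Tin) {rss. bd S rss} \<le> (1/2) ^ r" for S
  proof (cases "wt S \<le> 1")
    case True
    then show ?thesis by (simp add: bd_def)
  next
    case False
    have "{rss. bd S rss} = {rss. prot_run (gtP (Suc n) H (3*H+3*r) (qa n P1 (rline (cS S))) (qb n P1 (rline (cS S))) rss) x y \<noteq>
        (lcp (qa n P1 (rline (cS S)) x) (qb n P1 (rline (cS S)) y) < Suc n \<and> qa n P1 (rline (cS S)) x ! lcp (qa n P1 (rline (cS S)) x) (qb n P1 (rline (cS S)) y))}"
      using False by (simp add: bd_def qP_def truth_def Tin_def)
    also have "measure_pmf.prob (iidlist (iidlist (muh (Suc n)) 6) Tin) \<dots> \<le> (1/2) ^ r"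
      unfolding Tin_def by (rule gt_prob) (simp_all add: qa_def qb_def NH)
    finally show ?thesis .
  qed
  have tail: "measure_pmf.prob M {rsss. 1 \<le> nbadS f bd S0 rsss} \<le> real (Q choose 1) * ((1/2) ^ r) ^ 1"
    unfolding M_def by (rule tail_bound) (use bdp in auto)
  define Inv where "Inv S = (valid n I \<alpha> S \<and> fr \<alpha> S)" for S
  have inv_step: "Inv (f S rss)" if a: "Inv S" "\<not> bd S rss" for S rss
  proof (cases "wt S \<le> 1")
    case True
    then show ?thesis using a f_eq by simp
  next
    case False
    define m where "m = wt S"
    have m2: "m \<ge> 2" using False by (simp add: m_def)
    have sp: "split m S = (cS S, dS S)" by (simp add: cS_def dS_def m_def)
    have P: "3 * wt (cS S) > m \<and> 3 * wt (cS S) \<le> 2 * m \<and> wt (dS S) + wt (cS S) = wt S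
      \<and> (valid n I \<alpha> S \<longrightarrow> valid n I \<alpha> (cS S))
      \<and> (valid n I \<alpha> S \<and> \<not> fr \<alpha> (cS S) \<longrightarrow> valid n I \<alpha> (dS S) \<and> fr \<alpha> (dS S) = fr \<alpha> S)"
      by (rule split_props) (use m2 sp in \<open>auto simp: m_def\<close>)
    have vc: "valid n I \<alpha> (cS S)" using P a by (simp add: Inv_def)
    have cne: "cS S \<noteq> SHole" using P m2 by auto
    have lc: "length (fst (rline (cS S))) = n" using valid_rline[OF vc cne] .
    have ans: "prot_run (qP n P1 H Tin (rline (cS S)) rss) x y = fals \<alpha> (rline (cS S))"
      using a(2) False query_truth[OF P1 lc x_def y_def] by (simp add: bd_def truth_def)
    show ?thesis
    proof (cases "fals \<alpha> (rline (cS S))")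
      case True
      then show ?thesis using f_eq[of S rss] False ans vc cne by (simp add: Inv_def fr_def)
    next
      case F: False
      then have "\<not> fr \<alpha> (cS S)" by (simp add: fr_def)
      then show ?thesis using f_eq[of S rss] False ans P a F by (simp add: Inv_def)
    qed
  qed
  have fixS: "f S r = S" if "wt S \<le> 1" for S r using that f_eq by simp
  have decS: "3 * wt (f S r) \<le> 2 * wt S" if "wt S \<ge> 2" for S r
  proof -
    define m where "m = wt S"
    have m2: "m \<ge> 2" using that by (simp add: m_def)
    have sp: "split m S = (cS S, dS S)" by (simp add: cS_def dS_def m_def)
    have P: "3 * wt (cS S) > m \<and> 3 * wt (cS S) \<le> 2 * m \<and> wt (dS S) + wt (cS S) = wt S
      \<and> (valid n I \<alpha> S \<longrightarrow> valid n I \<alpha> (cS S))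
      \<and> (valid n I \<alpha> S \<and> \<not> fr \<alpha> (cS S) \<longrightarrow> valid n I \<alpha> (dS S) \<and> fr \<alpha> (dS S) = fr \<alpha> S)"
      by (rule split_props) (use m2 sp in \<open>auto simp: m_def\<close>)
    then show ?thesis using f_eq[of S r] that by (auto simp: m_def)
  qed
  have inv0: "Inv S0"
  proof -
    have "valid n I \<alpha> S0" using derives_valid[OF der wf] by (simp add: S0_def)
    moreover have "fals \<alpha> l"
    proof -
      have "lhs_val (fst l) \<alpha> = 0" unfolding lhs_val_def
        by (rule sum.neutral) (use fl in \<open>auto simp: false_line_def\<close>)
      then show ?thesis using fl by (simp add: fals_def sat_ineq_def false_line_def)
    qed
    moreover have "rline S0 = l" using derives_line[OF der] by (simp add: S0_def rline_conv)
    ultimately show ?thesis using conv_ne by (simp add: Inv_def fr_def S0_def)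
  qed
  have wS0: "wt S0 < 2 ^ K" using wt_conv[of T] K by (simp add: S0_def)
  have run: "prot_run (finP n P1 H Tin Q S0 rsss) x y = the_ax (runS f S0 (take Q rsss))" for rsss
    by (simp add: finP_def run_pbind run_iterP f_def)
  have det: "the_ax (runS f S0 rsss) \<in> I \<and> \<not> sat_ineq \<alpha> (the_ax (runS f S0 rsss))"
    if nb: "nbadS f bd S0 rsss = 0" and len: "length rsss = Q" for rsss
  proof -
    have iv: "Inv (runS f S0 rsss)"
      by (rule invariant_run[where bd=bd]) (use inv_step inv0 nb in auto)
    have "wt (runS f S0 rsss) \<le> 1"
    proof (rule ccontr)
      assume c: "\<not> wt (runS f S0 rsss) \<le> 1"
      from wt_decay[of f S0 rsss, OF fixS decS] c len
      have "3 ^ Q * wt (runS f S0 rsss) \<le> 2 ^ Q * wt S0" by simp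
      moreover have "3 ^ Q * 2 \<le> 3 ^ Q * wt (runS f S0 rsss)" using c by simp
      ultimately have "3 ^ Q * 2 \<le> 2 ^ Q * wt S0" by linarith
      also have "\<dots> < 2 ^ Q * 2 ^ K" using wS0 by simp
      also have "\<dots> = 2 ^ (3 * K)" by (simp add: Q_def power_add[symmetric])
      also have "\<dots> = (2 ^ 3) ^ K" by (rule power_mult)
      also have "\<dots> = (8::nat) ^ K" by simp
      also have "\<dots> \<le> 9 ^ K" by (rule power_mono) auto
      also have "\<dots> = 3 ^ Q" by (simp add: Q_def power_mult)
      finally show False by simp
    qed
    then show ?thesis using the_ax_ok[of n I \<alpha> "runS f S0 rsss"] iv by (simp add: Inv_def fals_def)
  qed
  define G where "G = {p. let l' = prot_run p (restrict_to P1 \<alpha>) (restrict_to ({..<n} - P1) \<alpha>) in l' \<in> I \<and> \<not> sat_ineq \<alpha> l'}"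
  have "measure_pmf.prob M (- (finP n P1 H Tin Q S0 -` G)) \<le> measure_pmf.prob M {rsss. 1 \<le> nbadS f bd S0 rsss}"
  proof (rule prob_mono_supp)
    fix rsss assume r: "rsss \<in> set_pmf M" "rsss \<in> - (finP n P1 H Tin Q S0 -` G)"
    have len: "length rsss = Q" using r(1) unfolding M_def by (rule set_iidlist)
    show "rsss \<in> {rsss. 1 \<le> nbadS f bd S0 rsss}"
    proof (rule ccontr)
      assume "rsss \<notin> {rsss. 1 \<le> nbadS f bd S0 rsss}"
      then have "nbadS f bd S0 rsss = 0" by simp
      from det[OF this len] have "finP n P1 H Tin Q S0 rsss \<in> G"
        using run[of rsss] len by (simp add: G_def x_def y_def Let_def)
      then show False using r(2) by simp
    qed
  qed
  also have "\<dots> \<le> 1/3" using tail rQ by (simp add: Q_def)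
  finally have c: "measure_pmf.prob M (- (finP n P1 H Tin Q S0 -` G)) \<le> 1/3" .
  have "measure_pmf.prob M (finP n P1 H Tin Q S0 -` G) \<ge> 2/3"
    using c measure_pmf.prob_compl[of "finP n P1 H Tin Q S0 -` G" M] by (simp add: Compl_eq_Diff_UNIV)
  then show "2/3 \<le> measure_pmf.prob (map_pmf (finP n P1 H (3*H+3*r) (2*K) (conv T))
           (iidlist (iidlist (iidlist (muh (Suc n)) 6) (3*H+3*r)) (2*K)))
         {p. let l = prot_run p (restrict_to P1 \<alpha>) (restrict_to ({..<n} - P1) \<alpha>) in l \<in> I \<and> \<not> sat_ineq \<alpha> l}"
    by (simp add: M_def Tin_def Q_def S0_def G_def)
qed

fun fullP :: "nat set \<Rightarrow> nat \<Rightarrow> (nat \<Rightarrow> bool) \<Rightarrow> (nat \<Rightarrow> bool, nat \<Rightarrow> bool, nat \<Rightarrow> bool) protocol" where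
  "fullP P1 0 acc = PLeaf acc"
| "fullP P1 (Suc k) acc = (if k \<in> P1
     then PAlice (\<lambda>x. x k) (fullP P1 k (acc(k := True))) (fullP P1 k (acc(k := False)))
     else PBob (\<lambda>y. y k) (fullP P1 k (acc(k := True))) (fullP P1 k (acc(k := False))))"

lemma run_fullP: "prot_run (fullP P1 k acc) x y = (\<lambda>i. if i < k then (if i \<in> P1 then x i else y i) else acc i)"
proof (induction k arbitrary: acc)
  case 0 then show ?case by simp
next
  case (Suc k)
  have "prot_run (fullP P1 (Suc k) acc) x y = prot_run (fullP P1 k (acc(k := if k \<in> P1 then x k else y k))) x y"
    by (cases "k \<in> P1"; cases "x k"; cases "y k") auto
  also have "\<dots> = (\<lambda>i. if i < Suc k then (if i \<in> P1 then x i else y i) else acc i)"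
    unfolding Suc.IH by (auto simp: fun_eq_iff less_Suc_eq)
  finally show ?case .
qed

lemma cost_fullP: "prot_cost (fullP P1 k acc) \<le> k"
  by (induction k arbitrary: acc) auto

lemma triv_bound:
  assumes wf: "wf_system n I" and no: "no_01_solution I" and P1: "P1 \<subseteq> {..<n}"
    and req: "kw_requires_rand_bits n I P1 t"
  shows "t \<le> n"
proof -
  define p where "p = pbind (fullP P1 n (\<lambda>_. False)) (\<lambda>\<beta>. PLeaf (SOME l. l \<in> I \<and> \<not> sat_ineq \<beta> l))"
  have "kw_rand_solves n I P1 (return_pmf p)"
    unfolding kw_rand_solves_def
  proof (intro allI)
    fix \<alpha> :: "nat \<Rightarrow> bool"
    define \<beta> where "\<beta> = prot_run (fullP P1 n (\<lambda>_. False)) (restrict_to P1 \<alpha>) (restrict_to ({..<n} - P1) \<alpha>)"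
    have b: "\<beta> i = \<alpha> i" if "i < n" for i using that by (simp add: \<beta>_def run_fullP restrict_to_def)
    have ex: "\<exists>l. l \<in> I \<and> \<not> sat_ineq \<beta> l" using no unfolding no_01_solution_def by blast
    define l where "l = (SOME l. l \<in> I \<and> \<not> sat_ineq \<beta> l)"
    have l: "l \<in> I \<and> \<not> sat_ineq \<beta> l" unfolding l_def by (rule someI_ex[OF ex])
    have "length (fst l) = n" using l wf by (simp add: wf_system_def)
    then have "sat_ineq \<beta> l = sat_ineq \<alpha> l"
      unfolding sat_ineq_def using lhs_val_cong[of "fst l" \<beta> \<alpha>] b by simp
    then have "prot_run p (restrict_to P1 \<alpha>) (restrict_to ({..<n} - P1) \<alpha>) \<in> I \<and>
        \<not> sat_ineq \<alpha> (prot_run p (restrict_to P1 \<alpha>) (restrict_to ({..<n} - P1) \<alpha>))"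
      using l by (simp add: p_def run_pbind \<beta>_def[symmetric] l_def[symmetric])
    then show "2/3 \<le> measure_pmf.prob (return_pmf p)
      {p. let l = prot_run p (restrict_to P1 \<alpha>) (restrict_to ({..<n} - P1) \<alpha>) in l \<in> I \<and> \<not> sat_ineq \<alpha> l}"
      by (simp add: Let_def)
  qed
  moreover have "prot_cost p \<le> n"
  proof -
    have "prot_cost p \<le> prot_cost (fullP P1 n (\<lambda>_. False)) + 0"
      unfolding p_def by (rule cost_pbind) simp
    then show ?thesis using cost_fullP[of P1 n "\<lambda>_. False"] by linarith
  qed
  ultimately show ?thesis using req unfolding kw_requires_rand_bits_def by auto
qed

lemma cp_size_nz[simp]: "cp_size T \<noteq> 0"
  by (cases T) auto

lemma one_bound:
  assumes der: "cp_derives I T l" and fl: "false_line l" and s: "cp_size T = 1"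
    and req: "kw_requires_rand_bits n I P1 t"
  shows "t = 0"
proof -
  obtain l' where T: "T = CP_Ax l'" using s by (cases T) auto
  have lI: "l \<in> I" and ll: "l' = l" using der by (auto simp: T elim: cp_derives.cases)
  have nf: "\<not> sat_ineq \<alpha> l" for \<alpha>
  proof -
    have "lhs_val (fst l) \<alpha> = 0" unfolding lhs_val_def
      by (rule sum.neutral) (use fl in \<open>auto simp: false_line_def\<close>)
    then show ?thesis using fl by (simp add: sat_ineq_def false_line_def)
  qed
  have "kw_rand_solves n I P1 (return_pmf (PLeaf l))"
    unfolding kw_rand_solves_def using lI nf by (simp add: Let_def)
  then have "t \<le> 0" using req unfolding kw_requires_rand_bits_def by force
  then show ?thesis by simp
qed

lemma floor_log_le_log: "m > 0 \<Longrightarrow> real (floor_log m) \<le> log 2 (real m)"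
proof -
  assume m: "m > 0"
  have "(2::real) ^ floor_log m \<le> real m"
    using floor_log_exp2_le[OF m] by (metis of_nat_le_iff of_nat_numeral of_nat_power)
  then have "log 2 ((2::real) ^ floor_log m) \<le> log 2 (real m)"
    by (intro log_mono) auto
  then show ?thesis by (simp add: log_nat_power)
qed

lemma main_bound:
  assumes wf: "wf_system n I" and P1: "P1 \<subseteq> {..<n}" and req: "kw_requires_rand_bits n I P1 t"
    and der: "cp_derives I T l" and fl: "false_line l" and n2: "n \<ge> 2"
    and s2: "cp_size T \<ge> 2" and sn: "cp_size T < 2 ^ n"
  shows "real t \<le> 5000 * log 2 (real (cp_size T)) * log 2 (real n)"
proof -
  define s where "s = cp_size T"
  define H where "H = floor_log (Suc n) + 1"
  define K where "K = floor_log s + 1"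
  define r where "r = floor_log (6 * K) + 1"
  have NH: "Suc n < 2 ^ H" using floor_log_exp2_gt[of "Suc n"] by (simp add: H_def)
  have KK: "cp_size T < 2 ^ K" using floor_log_exp2_gt[of s] by (simp add: K_def s_def)
  have rr: "6 * K < 2 ^ r" using floor_log_exp2_gt[of "6*K"] by (simp add: r_def)
  have rQ: "real (2 * K) * (1/2) ^ r \<le> 1/3"
  proof -
    have "real (6 * K) \<le> 2 ^ r" using rr by (metis less_imp_le of_nat_le_iff of_nat_numeral of_nat_power)
    then show ?thesis by (simp add: power_one_over field_simps)
  qed
  define Tin where "Tin = 3*H+3*r"
  have tb: "t \<le> 2 * K * (36 * Tin + 1)"
  proof -
    define R where "R = map_pmf (finP n P1 H (3*H+3*r) (2*K) (conv T))
           (iidlist (iidlist (iidlist (muh (Suc n)) 6) (3*H+3*r)) (2*K))"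
    have "kw_rand_solves n I P1 R" unfolding R_def by (rule outer_solves[OF wf P1 der fl NH KK rQ])
    moreover have "\<forall>p\<in>set_pmf R. prot_cost p \<le> 2 * K * (36 * Tin + 1)"
    proof
      fix p assume "p \<in> set_pmf R"
      then obtain z where "p = finP n P1 H (3*H+3*r) (2*K) (conv T) z" unfolding R_def by auto
      then show "prot_cost p \<le> 2 * K * (36 * Tin + 1)" using cost_finP[of n P1 H "3*H+3*r" "2*K" "conv T" z]
        by (simp add: Tin_def)
    qed
    ultimately show ?thesis using req unfolding kw_requires_rand_bits_def by blast
  qed
  define L where "L = log 2 (real n)"
  define ls where "ls = log 2 (real s)"
  have L1: "L \<ge> 1" using n2 by (simp add: L_def)
  have ls1: "ls \<ge> 1" using s2 by (simp add: ls_def s_def)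
  have lsn: "ls < n"
  proof -
    have "real s < 2 ^ n" using sn by (simp add: s_def)
    then have "ls < log 2 (2 ^ n)" unfolding ls_def using s2 by (intro log_less) (auto simp: s_def)
    then show ?thesis by (simp add: log_nat_power)
  qed
  have Kb: "real K \<le> 2 * ls"
  proof -
    have "real (floor_log s) \<le> ls" using floor_log_le_log[of s] s2 by (simp add: ls_def s_def)
    then show ?thesis using ls1 by (simp add: K_def)
  qed
  have Hb: "real H \<le> 3 * L"
  proof -
    have "real (floor_log (Suc n)) \<le> log 2 (real (Suc n))" by (rule floor_log_le_log) simp
    also have "\<dots> \<le> log 2 (2 * real n)" using n2 by (intro log_mono) auto
    also have "\<dots> = 1 + L" using n2 by (simp add: log_mult L_def)
    finally show ?thesis using L1 by (simp add: H_def)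
  qed
  have rb: "real r \<le> 6 * L"
  proof -
    have K0: "K > 0" by (simp add: K_def)
    have "real (floor_log (6 * K)) \<le> log 2 (real (6 * K))" by (rule floor_log_le_log) (use K0 in simp)
    also have "\<dots> \<le> log 2 (16 * real n)"
    proof (intro log_mono)
      show "real (6 * K) \<le> 16 * real n" using Kb lsn by simp
    qed (use K0 in auto)
    also have "\<dots> = 4 + L"
    proof -
      have "log 2 (16::real) = 4" using log_pow_cancel[of "2::real" 4] by simp
      then show ?thesis using n2 by (simp add: log_mult L_def)
    qed
    finally show ?thesis using L1 by (simp add: r_def)
  qed
  have Tb: "36 * real Tin + 1 \<le> 973 * L" using Hb rb L1 by (simp add: Tin_def)
  have "real t \<le> real (2 * K * (36 * Tin + 1))"
    using tb by (simp only: of_nat_le_iff)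
  also have "\<dots> = real (2 * K) * (36 * real Tin + 1)" by (simp add: algebra_simps)
  also have "\<dots> \<le> (4 * ls) * (973 * L)"
    using Kb Tb by (intro mult_mono) auto
  also have "\<dots> \<le> 5000 * ls * L" using ls1 L1 by (simp add: mult_right_mono)
  finally show ?thesis by (simp add: ls_def L_def s_def)
qed

theorem theorem1:
  "\<exists>c::real. c > 0 \<and>
     (\<forall>(n::nat) (I::ineq set) (P1::nat set) (t::nat) (T::cp_tree).
        n \<ge> 2 \<longrightarrow> wf_system n I \<longrightarrow> no_01_solution I \<longrightarrow> P1 \<subseteq> {..<n} \<longrightarrow>
        kw_requires_rand_bits n I P1 t \<longrightarrow> treelike_cp_refutation I T \<longrightarrow>
        real (cp_size T) \<ge> 2 powr (c * real t / log 2 (real n)))"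
proof (intro exI[where x="1/5000"] conjI allI impI)
  fix n :: nat and I P1 t T
  assume n2: "n \<ge> 2" and wf: "wf_system n I" and no: "no_01_solution I" and P1: "P1 \<subseteq> {..<n}"
    and req: "kw_requires_rand_bits n I P1 t" and ref: "treelike_cp_refutation I T"
  obtain l where der: "cp_derives I T l" and fl: "false_line l"
    using ref unfolding treelike_cp_refutation_def by blast
  define L where "L = log 2 (real n)"
  have L1: "L \<ge> 1" using n2 by (simp add: L_def)
  define s where "s = cp_size T"
  have s1: "s \<ge> 1" using cp_size_nz[of T] unfolding s_def by linarith
  show "real (cp_size T) \<ge> 2 powr ((1/5000) * real t / log 2 (real n))"
  proof (cases "s = 1")
    case True
    then have "t = 0" using one_bound[OF der fl _ req] by (simp add: s_def)
    then show ?thesis using True by (simp add: s_def)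
  next
    case False
    show ?thesis
    proof (cases "s \<ge> 2 ^ n")
      case True
      have tn: "t \<le> n" by (rule triv_bound[OF wf no P1 req])
      have a: "1 / L \<le> 1" using L1 by simp
      have "(1/5000) * real t / L = ((1/5000) * real t) * (1 / L)" by simp
      also have "\<dots> \<le> ((1/5000) * real t) * 1" by (rule mult_left_mono[OF a]) simp
      also have "\<dots> \<le> real t" by simp
      also have "\<dots> \<le> real n" using tn by simp
      finally have e: "(1/5000) * real t / L \<le> real n" .
      have "2 powr ((1/5000) * real t / L) \<le> 2 powr real n" by (rule powr_mono[OF e]) simp
      also have "\<dots> = 2 ^ n" by (simp add: powr_realpow)
      also have "\<dots> \<le> real s" using True by (metis of_nat_le_iff of_nat_numeral of_nat_power)
      finally show ?thesis by (simp add: L_def s_def)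
    next
      case F2: False
      have s2: "cp_size T \<ge> 2" using False s1 by (simp add: s_def)
      have sn: "cp_size T < 2 ^ n" using F2 by (simp add: s_def)
      have tb: "real t \<le> 5000 * log 2 (real s) * L"
        using main_bound[OF wf P1 req der fl n2 s2 sn] by (simp add: s_def L_def)
      have L0: "L > 0" using L1 by simp
      have "(1/5000) * real t / L \<le> log 2 (real s)"
        unfolding pos_divide_le_eq[OF L0] using tb by simp
      then have "2 powr ((1/5000) * real t / L) \<le> 2 powr (log 2 (real s))"
        by (rule powr_mono) simp
      also have "\<dots> = real s" using s1 by simp
      finally show ?thesis by (simp add: L_def s_def)
    qed
  qed
qed simp

end
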